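(* Let $\mathcal{R}=(G_0,e\to R)$ be an expanding replacement system with rearrangement group $\mathcal{G}$ of $X(G_0)$. The action of $\mathcal{G}$ on the directed graph $K^1(\mathcal{G})$ is proper; in particular, for any vertex $[f]$ of $K^1(\mathcal{G})$ with $f\colon X(G_0)\to X(G)$, the stabilizer of $[f]$ in $\mathcal{G}$ is isomorphic to the automorphism group of the directed graph $G$.
   Context: A graph is a finite directed multigraph (loops, multiple edges allowed); isomorphisms preserve directions. The replacement rule $e\to R$: $e$ a non-loop edge from $v$ to $w$, $R$ a graph containing $v,w$ (initial, terminal vertices). Replacing an edge $\varepsilon$ of a graph $G$: delete $\varepsilon$, glue in a copy of $R$ identifying initial/terminal vertices with those of $\varepsilon$; new edges $\varepsilon\zeta$ ($\zeta\in E(R)$). For a set $S$ of edges of $G$, $G\triangleleft S$ is obtained by replacing each edge of $S$; an expansion of $G$ is a graph obtained by finitely many replacements. $\mathcal{R}$ expanding means: $G_0$ and $R$ have no isolated vertices, initial and terminal vertices of $R$ are not adjacent, $R$ has $\ge3$ vertices and $\ge2$ edges. For any graph $G$, $X(G)$ is the limit space of $(G,e\to R)$: $X(G)=\Omega_G/\sim$ where $\Omega_G=E(G)\times E(R)^{\mathbb{N}}$ and $\varepsilon_0\varepsilon_1\cdots\sim\varepsilon_0'\varepsilon_1'\cdots$ iff for all $n$ the edges $\varepsilon_0\cdots\varepsilon_n$, $\varepsilon_0'\cdots\varepsilon_n'$ of the $n$-fold full expansion of $G$ share a vertex. For an edge $\epsilon$ of an expansion of $G$, the cell $C(\epsilon)\subseteq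 X(G)$ is the image of the sequences with prefix $\epsilon$. For cells $C(\epsilon)\subseteq X(G)$, $C(\epsilon')\subseteq X(G')$ with $\epsilon,\epsilon'$ both loops or both non-loops, the canonical homeomorphism is induced by $\epsilon\zeta_1\zeta_2\cdots\mapsto\epsilon'\zeta_1\zeta_2\cdots$. A rearrangement $X(G)\to X(G')$ is a homeomorphism restricting to canonical homeomorphisms on the cells of some finite cover of $X(G)$ by cells with disjoint interiors (interior = cell minus images of endpoints of $\epsilon$); $\mathcal{G}$ is the group of rearrangements $X(G_0)\to X(G_0)$. For a graph isomorphism $\varphi\colon G_1\to G_2$, the base isomorphism $X(G_1)\to X(G_2)$ maps each $C(\epsilon)$ ($\epsilon\in E(G_1)$) canonically onto $C(\varphi(\epsilon))$. $x_S\colon X(G)\to X(G\triangleleft S)$ is the rearrangement mapping each cell $C(\epsilon)\subseteq X(G)$, $\epsilon$ an edge of $G\triangleleft S$, canonically onto the cell $C(\epsilon)\subseteq X(G\triangleleft S)$. A simple expansion morphism is $\varphi\circ x_{\{\epsilon\}}$ with $\varphi$ a base isomorphism. Rearrangements $f\colon X(G)\to X(G_1)$ and $g\colon X(G)\to X(G_2)$ are range equivalent if $g=\varphi\circ f$ for a base isomorphism $\varphi$; $[f]$ is the class. $K^1(\mathcal{G})$ is the directed graph whose vertices are range-equivalence classes of rearrangements with domain $X(G_0)$, with an edge from $[f]$ to $[g]$ when $g=x\circ f$ for some simple expansion morphism $x$. $\mathcal{G}$ acts by $[f]\cdot g=[f\circ g]$. *)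

theory Defs
  imports "HOL-Analysis.Analysis" "HOL-Algebra.Group"
begin

record ('v, 'e) dgraph =
  verts :: "'v set"
  edges :: "'e set"
  src   :: "'e \<Rightarrow> 'v"
  tgt   :: "'e \<Rightarrow> 'v"

definition fin_graph :: "('v, 'e) dgraph \<Rightarrow> bool" where
  "fin_graph G \<longleftrightarrow> finite (verts G) \<and> finite (edges G) \<and>
     (\<forall>e\<in>edges G. src G e \<in> verts G \<and> tgt G e \<in> verts G)"

definition no_isolated :: "('v, 'e) dgraph \<Rightarrow> bool" where
  "no_isolated G \<longleftrightarrow> (\<forall>v\<in>verts G. \<exists>e\<in>edges G. src G e = v \<or> tgt G e = v)"

definition graph_iso :: "('v, 'e) dgraph \<Rightarrow> ('u, 'd) dgraph \<Rightarrow> ('v \<Rightarrow> 'u) \<Rightarrow> ('e \<Rightarrow> 'd) \<Rightarrow> bool" where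
  "graph_iso G H \<phi>V \<phi>E \<longleftrightarrow> bij_betw \<phi>V (verts G) (verts H) \<and> bij_betw \<phi>E (edges G) (edges H) \<and>
     (\<forall>e\<in>edges G. src H (\<phi>E e) = \<phi>V (src G e) \<and> tgt H (\<phi>E e) = \<phi>V (tgt G e))"

definition aut_group :: "('v, 'e) dgraph \<Rightarrow> (('v \<Rightarrow> 'v) \<times> ('e \<Rightarrow> 'e)) monoid" where
  "aut_group G = \<lparr> carrier = {(\<phi>V, \<phi>E). graph_iso G G \<phi>V \<phi>E \<and>
                              \<phi>V \<in> extensional (verts G) \<and> \<phi>E \<in> extensional (edges G)},
                  mult = (\<lambda>(a, b) (c, d). (compose (verts G) a c, compose (edges G) b d)),
                  one = (restrict id (verts G), restrict id (edges G)) \<rparr>"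

text \<open>The replacement rule \<open>e \<rightarrow> R\<close> is given by the graph \<open>R\<close> together with its
  initial vertex \<open>vi\<close> and terminal vertex \<open>vt\<close>.\<close>

definition expanding :: "('v, 'e) dgraph \<Rightarrow> ('w, 'r) dgraph \<Rightarrow> 'w \<Rightarrow> 'w \<Rightarrow> bool" where
  "expanding G0 R vi vt \<longleftrightarrow>
     fin_graph G0 \<and> fin_graph R \<and> no_isolated G0 \<and> no_isolated R \<and>
     vi \<in> verts R \<and> vt \<in> verts R \<and> vi \<noteq> vt \<and>
     (\<forall>z\<in>edges R. \<not> (src R z = vi \<and> tgt R z = vt) \<and> \<not> (src R z = vt \<and> tgt R z = vi)) \<and>
     card (verts R) \<ge> 3 \<and> card (edges R) \<ge> 2"

text \<open>Edges of expansions of \<open>G\<close> are words \<open>(\<epsilon>, [\<zeta>1,...,\<zeta>k])\<close>. Vertices of expansions are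
  either original vertices \<open>Inl v\<close>, or \<open>Inr (\<epsilon>, zs, x)\<close>: the copy of the (non initial, non
  terminal) vertex \<open>x\<close> of \<open>R\<close> created when replacing the edge \<open>(\<epsilon>, zs)\<close>.\<close>

fun xends :: "('w, 'r) dgraph \<Rightarrow> 'w \<Rightarrow> 'w \<Rightarrow> 'e \<Rightarrow> 'r list \<Rightarrow>
      ('v + ('e \<times> 'r list \<times> 'w)) \<times> ('v + ('e \<times> 'r list \<times> 'w)) \<Rightarrow> 'r list \<Rightarrow>
      ('v + ('e \<times> 'r list \<times> 'w)) \<times> ('v + ('e \<times> 'r list \<times> 'w))" where
  "xends R vi vt e P ab [] = ab"
| "xends R vi vt e P ab (z # zs) =
     (let att = (\<lambda>x. if x = vi then fst ab else if x = vt then snd ab else Inr (e, P, x))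
      in xends R vi vt e (P @ [z]) (att (src R z), att (tgt R z)) zs)"

text \<open>Endpoints (initial, terminal) of the edge \<open>(e, zs)\<close> in any expansion containing it.\<close>
definition ends :: "('v, 'e) dgraph \<Rightarrow> ('w, 'r) dgraph \<Rightarrow> 'w \<Rightarrow> 'w \<Rightarrow> 'e \<times> 'r list \<Rightarrow>
      ('v + ('e \<times> 'r list \<times> 'w)) \<times> ('v + ('e \<times> 'r list \<times> 'w))" where
  "ends G R vi vt \<epsilon> = xends R vi vt (fst \<epsilon>) [] (Inl (src G (fst \<epsilon>)), Inl (tgt G (fst \<epsilon>))) (snd \<epsilon>)"

definition is_loopw :: "('v, 'e) dgraph \<Rightarrow> ('w, 'r) dgraph \<Rightarrow> 'w \<Rightarrow> 'w \<Rightarrow> 'e \<times> 'r list \<Rightarrow> bool" where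
  "is_loopw G R vi vt \<epsilon> \<longleftrightarrow> fst (ends G R vi vt \<epsilon>) = snd (ends G R vi vt \<epsilon>)"

definition words :: "('v, 'e) dgraph \<Rightarrow> ('w, 'r) dgraph \<Rightarrow> ('e \<times> 'r list) set" where
  "words G R = {(e, zs). e \<in> edges G \<and> set zs \<subseteq> edges R}"

definition Omega :: "('v, 'e) dgraph \<Rightarrow> ('w, 'r) dgraph \<Rightarrow> ('e \<times> (nat \<Rightarrow> 'r)) set" where
  "Omega G R = edges G \<times> (UNIV \<rightarrow> edges R)"

definition pre :: "nat \<Rightarrow> 'e \<times> (nat \<Rightarrow> 'r) \<Rightarrow> 'e \<times> 'r list" where
  "pre n \<omega> = (fst \<omega>, map (snd \<omega>) [0..<n])"

definition sharevert :: "('v, 'e) dgraph \<Rightarrow> ('w, 'r) dgraph \<Rightarrow> 'w \<Rightarrow> 'w \<Rightarrow> 'e \<times> 'r list \<Rightarrow> 'e \<times> 'r list \<Rightarrow> bool" where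
  "sharevert G R vi vt \<epsilon> \<epsilon>' \<longleftrightarrow>
     {fst (ends G R vi vt \<epsilon>), snd (ends G R vi vt \<epsilon>)} \<inter> {fst (ends G R vi vt \<epsilon>'), snd (ends G R vi vt \<epsilon>')} \<noteq> {}"

definition gsim :: "('v, 'e) dgraph \<Rightarrow> ('w, 'r) dgraph \<Rightarrow> 'w \<Rightarrow> 'w \<Rightarrow> 'e \<times> (nat \<Rightarrow> 'r) \<Rightarrow> 'e \<times> (nat \<Rightarrow> 'r) \<Rightarrow> bool" where
  "gsim G R vi vt \<omega> \<omega>' \<longleftrightarrow> (\<forall>n. sharevert G R vi vt (pre n \<omega>) (pre n \<omega>'))"

definition cls :: "('v, 'e) dgraph \<Rightarrow> ('w, 'r) dgraph \<Rightarrow> 'w \<Rightarrow> 'w \<Rightarrow> 'e \<times> (nat \<Rightarrow> 'r) \<Rightarrow> ('e \<times> (nat \<Rightarrow> 'r)) set" where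
  "cls G R vi vt \<omega> = {\<omega>' \<in> Omega G R. gsim G R vi vt \<omega> \<omega>'}"

text \<open>The limit space \<open>X(G) = \<Omega>_G / \<sim>\<close> (points are equivalence classes).\<close>
definition Xsp :: "('v, 'e) dgraph \<Rightarrow> ('w, 'r) dgraph \<Rightarrow> 'w \<Rightarrow> 'w \<Rightarrow> ('e \<times> (nat \<Rightarrow> 'r)) set set" where
  "Xsp G R vi vt = cls G R vi vt ` Omega G R"

definition Omega_top :: "('v, 'e) dgraph \<Rightarrow> ('w, 'r) dgraph \<Rightarrow> ('e \<times> (nat \<Rightarrow> 'r)) topology" where
  "Omega_top G R = prod_topology (discrete_topology (edges G))
                     (product_topology (\<lambda>_. discrete_topology (edges R)) UNIV)"

definition Xtop :: "('v, 'e) dgraph \<Rightarrow> ('w, 'r) dgraph \<Rightarrow> 'w \<Rightarrow> 'w \<Rightarrow> ('e \<times> (nat \<Rightarrow> 'r)) set topology" where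
  "Xtop G R vi vt = topology (\<lambda>U. U \<subseteq> Xsp G R vi vt \<and>
      openin (Omega_top G R) {\<omega> \<in> topspace (Omega_top G R). cls G R vi vt \<omega> \<in> U})"

definition has_prefix :: "'e \<times> 'r list \<Rightarrow> 'e \<times> (nat \<Rightarrow> 'r) \<Rightarrow> bool" where
  "has_prefix \<epsilon> \<omega> \<longleftrightarrow> pre (length (snd \<epsilon>)) \<omega> = \<epsilon>"

text \<open>\<open>\<epsilon> \<zeta>1 \<zeta>2 ... \<mapsto> \<epsilon>' \<zeta>1 \<zeta>2 ...\<close>\<close>
definition reprefix :: "'e \<times> 'r list \<Rightarrow> 'd \<times> 'r list \<Rightarrow> 'e \<times> (nat \<Rightarrow> 'r) \<Rightarrow> 'd \<times> (nat \<Rightarrow> 'r)" where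
  "reprefix \<epsilon> \<epsilon>' \<omega> = (fst \<epsilon>', \<lambda>n. if n < length (snd \<epsilon>') then snd \<epsilon>' ! n
                         else snd \<omega> (n - length (snd \<epsilon>') + length (snd \<epsilon>)))"

definition cell :: "('v, 'e) dgraph \<Rightarrow> ('w, 'r) dgraph \<Rightarrow> 'w \<Rightarrow> 'w \<Rightarrow> 'e \<times> 'r list \<Rightarrow> ('e \<times> (nat \<Rightarrow> 'r)) set set" where
  "cell G R vi vt \<epsilon> = cls G R vi vt ` {\<omega> \<in> Omega G R. has_prefix \<epsilon> \<omega>}"

text \<open>The point of \<open>X(G)\<close> which is the image of a vertex \<open>p\<close> of an expansion: limits of
  sequences whose prefixes are eventually all incident to \<open>p\<close>.\<close>
definition vpoint :: "('v, 'e) dgraph \<Rightarrow> ('w, 'r) dgraph \<Rightarrow> 'w \<Rightarrow> 'w \<Rightarrow> ('v + ('e \<times> 'r list \<times> 'w)) \<Rightarrow> ('e \<times> (nat \<Rightarrow> 'r)) set set" where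
  "vpoint G R vi vt p = cls G R vi vt ` {\<omega> \<in> Omega G R. \<exists>N. \<forall>n\<ge>N.
       p = fst (ends G R vi vt (pre n \<omega>)) \<or> p = snd (ends G R vi vt (pre n \<omega>))}"

definition cell_interior :: "('v, 'e) dgraph \<Rightarrow> ('w, 'r) dgraph \<Rightarrow> 'w \<Rightarrow> 'w \<Rightarrow> 'e \<times> 'r list \<Rightarrow> ('e \<times> (nat \<Rightarrow> 'r)) set set" where
  "cell_interior G R vi vt \<epsilon> = cell G R vi vt \<epsilon> -
      (vpoint G R vi vt (fst (ends G R vi vt \<epsilon>)) \<union> vpoint G R vi vt (snd (ends G R vi vt \<epsilon>)))"

text \<open>\<open>f\<close> restricts on \<open>C(\<epsilon>) \<subseteq> X(G)\<close> to the canonical homeomorphism onto \<open>C(\<epsilon>') \<subseteq> X(G')\<close>.\<close>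
definition canonical_on :: "('v, 'e) dgraph \<Rightarrow> ('u, 'd) dgraph \<Rightarrow> ('w, 'r) dgraph \<Rightarrow> 'w \<Rightarrow> 'w \<Rightarrow>
      'e \<times> 'r list \<Rightarrow> 'd \<times> 'r list \<Rightarrow> (('e \<times> (nat \<Rightarrow> 'r)) set \<Rightarrow> ('d \<times> (nat \<Rightarrow> 'r)) set) \<Rightarrow> bool" where
  "canonical_on G G' R vi vt \<epsilon> \<epsilon>' f \<longleftrightarrow>
     is_loopw G R vi vt \<epsilon> = is_loopw G' R vi vt \<epsilon>' \<and>
     (\<forall>\<omega>\<in>Omega G R. has_prefix \<epsilon> \<omega> \<longrightarrow> f (cls G R vi vt \<omega>) = cls G' R vi vt (reprefix \<epsilon> \<epsilon>' \<omega>))"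

definition rearrangement :: "('v, 'e) dgraph \<Rightarrow> ('u, 'd) dgraph \<Rightarrow> ('w, 'r) dgraph \<Rightarrow> 'w \<Rightarrow> 'w \<Rightarrow>
      (('e \<times> (nat \<Rightarrow> 'r)) set \<Rightarrow> ('d \<times> (nat \<Rightarrow> 'r)) set) \<Rightarrow> bool" where
  "rearrangement G G' R vi vt f \<longleftrightarrow>
     homeomorphic_map (Xtop G R vi vt) (Xtop G' R vi vt) f \<and>
     (\<exists>Cov. finite Cov \<and> Cov \<subseteq> words G R \<and>
        (\<Union>\<epsilon>\<in>Cov. cell G R vi vt \<epsilon>) = Xsp G R vi vt \<and>
        (\<forall>\<epsilon>1\<in>Cov. \<forall>\<epsilon>2\<in>Cov. \<epsilon>1 \<noteq> \<epsilon>2 \<longrightarrow>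
            cell_interior G R vi vt \<epsilon>1 \<inter> cell_interior G R vi vt \<epsilon>2 = {}) \<and>
        (\<forall>\<epsilon>\<in>Cov. \<exists>\<epsilon>'\<in>words G' R. canonical_on G G' R vi vt \<epsilon> \<epsilon>' f))"

definition rearr_group :: "('v, 'e) dgraph \<Rightarrow> ('w, 'r) dgraph \<Rightarrow> 'w \<Rightarrow> 'w \<Rightarrow>
      (('e \<times> (nat \<Rightarrow> 'r)) set \<Rightarrow> ('e \<times> (nat \<Rightarrow> 'r)) set) monoid" where
  "rearr_group G0 R vi vt = \<lparr> carrier = {f. rearrangement G0 G0 R vi vt f \<and> f \<in> extensional (Xsp G0 R vi vt)},
      mult = (\<lambda>f g. compose (Xsp G0 R vi vt) f g),
      one = restrict id (Xsp G0 R vi vt) \<rparr>"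

text \<open>Base isomorphism \<open>X(G1) \<rightarrow> X(G2)\<close> induced by a graph isomorphism with edge map \<open>\<phi>E\<close>:
  maps each \<open>C(\<epsilon>)\<close> canonically onto \<open>C(\<phi>E \<epsilon>)\<close>.\<close>
definition base_map :: "('v, 'e) dgraph \<Rightarrow> ('u, 'd) dgraph \<Rightarrow> ('w, 'r) dgraph \<Rightarrow> 'w \<Rightarrow> 'w \<Rightarrow> ('e \<Rightarrow> 'd) \<Rightarrow>
      ('e \<times> (nat \<Rightarrow> 'r)) set \<Rightarrow> ('d \<times> (nat \<Rightarrow> 'r)) set" where
  "base_map G1 G2 R vi vt \<phi>E x = (let \<omega> = (SOME \<omega>. \<omega> \<in> x) in cls G2 R vi vt (\<phi>E (fst \<omega>), snd \<omega>))"

definition range_equiv :: "('v, 'e) dgraph \<Rightarrow> ('w, 'r) dgraph \<Rightarrow> 'w \<Rightarrow> 'w \<Rightarrow>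
      ('u, 'd) dgraph \<Rightarrow> (('e \<times> (nat \<Rightarrow> 'r)) set \<Rightarrow> ('d \<times> (nat \<Rightarrow> 'r)) set) \<Rightarrow>
      ('t, 'c) dgraph \<Rightarrow> (('e \<times> (nat \<Rightarrow> 'r)) set \<Rightarrow> ('c \<times> (nat \<Rightarrow> 'r)) set) \<Rightarrow> bool" where
  "range_equiv G0 R vi vt G1 f1 G2 f2 \<longleftrightarrow>
     (\<exists>\<phi>V \<phi>E. graph_iso G1 G2 \<phi>V \<phi>E \<and>
        (\<forall>x\<in>Xsp G0 R vi vt. f2 x = base_map G1 G2 R vi vt \<phi>E (f1 x)))"

text \<open>Stabilizer in \<open>\<G>\<close> of the vertex \<open>[f]\<close> of \<open>K^1(\<G>)\<close>, where \<open>f : X(G0) \<rightarrow> X(G)\<close>,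
  under the action \<open>[f] \<cdot> g = [f \<circ> g]\<close>.\<close>
definition stabilizer :: "('v, 'e) dgraph \<Rightarrow> ('w, 'r) dgraph \<Rightarrow> 'w \<Rightarrow> 'w \<Rightarrow>
      ('u, 'd) dgraph \<Rightarrow> (('e \<times> (nat \<Rightarrow> 'r)) set \<Rightarrow> ('d \<times> (nat \<Rightarrow> 'r)) set) \<Rightarrow>
      (('e \<times> (nat \<Rightarrow> 'r)) set \<Rightarrow> ('e \<times> (nat \<Rightarrow> 'r)) set) set" where
  "stabilizer G0 R vi vt G f = {g \<in> carrier (rearr_group G0 R vi vt).
      range_equiv G0 R vi vt G (compose (Xsp G0 R vi vt) f g) G f}"

end

theory Submission
  imports Defs
begin

section \<open>Endpoints\<close>

definition stp :: "('w, 'r) dgraph \<Rightarrow> 'w \<Rightarrow> 'w \<Rightarrow> 'e \<Rightarrow> 'r list \<Rightarrow>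
      ('v + ('e \<times> 'r list \<times> 'w)) \<times> ('v + ('e \<times> 'r list \<times> 'w)) \<Rightarrow> 'r \<Rightarrow>
      ('v + ('e \<times> 'r list \<times> 'w)) \<times> ('v + ('e \<times> 'r list \<times> 'w))" where
  "stp R vi vt e P ab z =
     (let att = (\<lambda>x. if x = vi then fst ab else if x = vt then snd ab else Inr (e, P, x))
      in (att (src R z), att (tgt R z)))"

lemma xends_snoc:
  "xends R vi vt e P ab (zs @ [z]) = stp R vi vt e (P @ zs) (xends R vi vt e P ab zs) z"
  by (induction zs arbitrary: P ab) (simp_all add: stp_def Let_def)

lemma ends_Nil: "ends G R vi vt (e, []) = (Inl (src G e), Inl (tgt G e))"
  by (simp add: ends_def)

lemma ends_snoc: "ends G R vi vt (e, P @ [z]) = stp R vi vt e P (ends G R vi vt (e, P)) z"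
  by (simp add: ends_def xends_snoc)

definition cps :: "'a \<times> 'a \<Rightarrow> 'a set" where "cps ab = {fst ab, snd ab}"

lemma cps_stp: "cps (stp R vi vt e P ab z) \<subseteq> cps ab \<union> {Inr (e, P, x) | x. x \<noteq> vi \<and> x \<noteq> vt}"
  by (auto simp: cps_def stp_def Let_def)

lemma ends_form:
  fixes G :: "('v, 'e) dgraph" and R :: "('w, 'r) dgraph"
  shows "cps (ends G R vi vt (e, P)) \<subseteq> Inl ` {src G e, tgt G e} \<union>
      {Inr (e, Q, x) | Q x. length Q < length P \<and> take (length Q) P = Q}"
proof (induction P rule: rev_induct)
  case Nil
  then show ?case by (auto simp: ends_Nil cps_def)
next
  case (snoc z P)
  show ?case
  proof
    fix c assume "c \<in> cps (ends G R vi vt (e, P @ [z]))"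
    then have "c \<in> cps (ends G R vi vt (e, P)) \<or> (\<exists>x. c = Inr (e, P, x))"
      using cps_stp[of R vi vt e P "ends G R vi vt (e, P)" z] by (auto simp: ends_snoc)
    then show "c \<in> Inl ` {src G e, tgt G e} \<union>
      {Inr (e, Q, x) | Q x. length Q < length (P @ [z]) \<and> take (length Q) (P @ [z]) = Q}"
      using snoc by auto
  qed
qed

lemma ends_form':
  assumes "c \<in> cps (ends G R vi vt (e, P))"
  shows "c = Inl (src G e) \<or> c = Inl (tgt G e) \<or>
         (\<exists>Q x. c = Inr (e, Q, x) \<and> length Q < length P \<and> take (length Q) P = Q)"
  using ends_form[of G R vi vt e P] assms by blast

definition Rok :: "('w, 'r) dgraph \<Rightarrow> 'w \<Rightarrow> 'w \<Rightarrow> bool" where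
  "Rok R vi vt \<longleftrightarrow> vi \<noteq> vt \<and>
     (\<forall>z\<in>edges R. \<not> (src R z = vi \<and> tgt R z = vt) \<and> \<not> (src R z = vt \<and> tgt R z = vi))"

lemma fresh_ends:
  fixes G :: "('v, 'e) dgraph" and R :: "('w, 'r) dgraph"
  assumes "length P' \<le> length P"
  shows "Inr (e, P, x) \<notin> cps (ends G R vi vt (e', P'))"
  using ends_form'[of "Inr (e, P, x)" G R vi vt e' P'] assms by auto

lemma fresh_ends_set:
  fixes G :: "('v, 'e) dgraph" and R :: "('w, 'r) dgraph"
  assumes "length P' \<le> length P"
  shows "cps (ends G R vi vt (e', P')) \<inter> {Inr (e, P, x) | x. True} = {}"
  using fresh_ends[OF assms, of e _ G R vi vt e'] by auto

lemma cps_ends_snoc: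
  fixes G :: "('v, 'e) dgraph" and R :: "('w, 'r) dgraph"
  shows "cps (ends G R vi vt (e, P @ [z])) \<subseteq> cps (ends G R vi vt (e, P)) \<union> {Inr (e, P, x) | x. True}"
  using cps_stp[of R vi vt e P "ends G R vi vt (e, P)" z] by (auto simp: ends_snoc)

lemma loop_snoc:
  assumes "Rok R vi vt" "z \<in> edges R"
  shows "is_loopw G R vi vt (e, P @ [z]) \<longleftrightarrow> src R z = tgt R z"
proof -
  define ab where "ab = ends G R vi vt (e, P)"
  have f1: "Inr (e, P, x) \<noteq> fst ab" "Inr (e, P, x) \<noteq> snd ab" for x
    using fresh_ends[of P P e x G R vi vt e] unfolding ab_def cps_def by auto
  have r: "\<not> (src R z = vi \<and> tgt R z = vt)" "\<not> (src R z = vt \<and> tgt R z = vi)" "vi \<noteq> vt"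
    using assms unfolding Rok_def by auto
  show ?thesis
    unfolding is_loopw_def ends_snoc ab_def[symmetric] stp_def Let_def fst_conv snd_conv
    using r f1[of "src R z"] f1[of "tgt R z"] f1[of "src R z", symmetric] f1[of "tgt R z", symmetric]
    by (cases "src R z = vi"; cases "src R z = vt"; cases "tgt R z = vi"; cases "tgt R z = vt"; simp)
qed

lemma loop_Nil: "is_loopw G R vi vt (e, []) \<longleftrightarrow> src G e = tgt G e"
  by (simp add: is_loopw_def ends_Nil)

lemma cps_nonempty: "cps ab \<noteq> {}" by (simp add: cps_def)

lemma sharevert_cps: "sharevert G R vi vt a b \<longleftrightarrow> cps (ends G R vi vt a) \<inter> cps (ends G R vi vt b) \<noteq> {}"
  by (simp add: sharevert_def cps_def)

lemma share_step:
  fixes G :: "('v, 'e) dgraph" and R :: "('w, 'r) dgraph"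
  assumes ok: "Rok R vi vt" and z: "z' \<in> edges R"
    and len: "length P' = length P" "length P'' = length P"
    and s1: "sharevert G R vi vt (e, P @ [z]) (e', P' @ [z'])"
    and s2: "sharevert G R vi vt (e', P' @ [z']) (e'', P'' @ [z''])"
  shows "sharevert G R vi vt (e, P) (e'', P'')"
proof (rule ccontr)
  assume ns: "\<not> sharevert G R vi vt (e, P) (e'', P'')"
  define C where "C = (cps (ends G R vi vt (e, P)) :: ('v + 'e \<times> 'r list \<times> 'w) set)"
  define C' where "C' = (cps (ends G R vi vt (e', P')) :: ('v + 'e \<times> 'r list \<times> 'w) set)"
  define C'' where "C'' = (cps (ends G R vi vt (e'', P'')) :: ('v + 'e \<times> 'r list \<times> 'w) set)"
  define N where "N = ({Inr (e, P, x) | x. True} :: ('v + 'e \<times> 'r list \<times> 'w) set)"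
  define N' where "N' = ({Inr (e', P', x) | x. True} :: ('v + 'e \<times> 'r list \<times> 'w) set)"
  define N'' where "N'' = ({Inr (e'', P'', x) | x. True} :: ('v + 'e \<times> 'r list \<times> 'w) set)"
  have d: "C \<inter> C'' = {}" using ns by (simp add: sharevert_cps C_def C''_def)
  have fr: "C \<inter> N' = {}" "C \<inter> N'' = {}" "C' \<inter> N = {}" "C' \<inter> N'' = {}" "C'' \<inter> N = {}" "C'' \<inter> N' = {}"
    unfolding C_def C'_def C''_def N_def N'_def N''_def by (rule fresh_ends_set, simp add: len)+
  obtain u where u: "u \<in> cps (ends G R vi vt (e, P @ [z]))" "u \<in> cps (ends G R vi vt (e', P' @ [z']))"
    using s1 by (auto simp: sharevert_cps)
  obtain w where w: "w \<in> cps (ends G R vi vt (e'', P'' @ [z'']))" "w \<in> cps (ends G R vi vt (e', P' @ [z']))"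
    using s2 by (auto simp: sharevert_cps)
  have u1: "u \<in> C \<union> N" "u \<in> C' \<union> N'" using u cps_ends_snoc[of G R vi vt e P z] cps_ends_snoc[of G R vi vt e' P' z']
    unfolding C_def C'_def N_def N'_def by blast+
  have w1: "w \<in> C'' \<union> N''" "w \<in> C' \<union> N'" using w cps_ends_snoc[of G R vi vt e'' P'' z''] cps_ends_snoc[of G R vi vt e' P' z']
    unfolding C''_def C'_def N''_def N'_def by blast+
  have NN: "(e, P) = (e', P')" if "N \<inter> N' \<noteq> {}" using that unfolding N_def N'_def by auto
  have NN2: "(e'', P'') = (e', P')" if "N'' \<inter> N' \<noteq> {}" using that unfolding N''_def N'_def by auto
  show False
  proof (cases "(e, P) = (e', P')")
    case True
    then have "C = C'" "N = N'" unfolding C_def C'_def N_def N'_def by auto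
    then have "w \<in> (C \<union> N) \<inter> (C'' \<union> N'')" using w1 by auto
    moreover have "N \<inter> N'' = {}"
    proof
      show "N \<inter> N'' \<subseteq> {}"
      proof
        fix y assume "y \<in> N \<inter> N''"
        then have "(e, P) = (e'', P'')" unfolding N_def N''_def by auto
        then have "C = C''" unfolding C_def C''_def by simp
        then show "y \<in> {}" using d unfolding C_def by (simp add: cps_def)
      qed
    qed simp
    ultimately show False using d fr \<open>N = N'\<close> by blast
  next
    case F1: False
    show False
    proof (cases "(e'', P'') = (e', P')")
      case True
      then have "C'' = C'" "N'' = N'" unfolding C''_def C'_def N''_def N'_def by auto
      then have "u \<in> (C \<union> N) \<inter> (C'' \<union> N'')" using u1 by auto
      moreover have "N \<inter> N'' = {}" using F1 True unfolding N_def N''_def by auto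
      ultimately show False using d fr \<open>N'' = N'\<close> by blast
    next
      case F2: False
      have "N \<inter> N' = {}" using NN F1 by blast
      then have uC: "u \<in> C \<inter> C'" using u1 fr by blast
      have "N'' \<inter> N' = {}" using NN2 F2 by blast
      then have wC: "w \<in> C'' \<inter> C'" using w1 fr by blast
      have uw: "u \<noteq> w" using uC wC d by blast
      define ab where "ab = ends G R vi vt (e', P')"
      have fab: "Inr (e', P', x) \<noteq> fst ab" "Inr (e', P', x) \<noteq> snd ab" for x
        using fresh_ends[of P' P' e' x G R vi vt e'] unfolding ab_def cps_def by auto
      have cc: "cps (ends G R vi vt (e', P' @ [z'])) = cps (stp R vi vt e' P' ab z')"
        by (simp add: ends_snoc ab_def)
      have uC': "u \<in> {fst ab, snd ab}" "w \<in> {fst ab, snd ab}"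
        using uC wC unfolding C'_def ab_def cps_def by auto
      have "u \<in> cps (stp R vi vt e' P' ab z')" "w \<in> cps (stp R vi vt e' P' ab z')"
        using u w cc by auto
      moreover have r: "\<not> (src R z' = vi \<and> tgt R z' = vt)" "\<not> (src R z' = vt \<and> tgt R z' = vi)" "vi \<noteq> vt"
        using ok z unfolding Rok_def by auto
      ultimately show False using uC' uw fab[of "src R z'"] fab[of "tgt R z'"]
        fab[of "src R z'", symmetric] fab[of "tgt R z'", symmetric]
        unfolding cps_def stp_def Let_def fst_conv snd_conv
        by (cases "src R z' = vi"; cases "src R z' = vt"; cases "tgt R z' = vi"; cases "tgt R z' = vt"; auto)
    qed
  qed
qed

section \<open>The equivalence relation\<close>

lemma Omega_iff: "\<omega> \<in> Omega G R \<longleftrightarrow> fst \<omega> \<in> edges G \<and> (\<forall>n. snd \<omega> n \<in> edges R)"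
  by (cases \<omega>) (auto simp: Omega_def Pi_def)

lemma pre_Suc: "pre (Suc n) \<omega> = (fst \<omega>, snd (pre n \<omega>) @ [snd \<omega> n])"
  by (simp add: pre_def)

lemma length_pre [simp]: "length (snd (pre n \<omega>)) = n"
  by (simp add: pre_def)

lemma fst_pre [simp]: "fst (pre n \<omega>) = fst \<omega>"
  by (simp add: pre_def)

lemma gsim_refl: "gsim G R vi vt \<omega> \<omega>"
  by (simp add: gsim_def sharevert_cps cps_def)

lemma gsim_sym: "gsim G R vi vt \<omega> \<omega>' \<Longrightarrow> gsim G R vi vt \<omega>' \<omega>"
  unfolding gsim_def sharevert_def by (simp add: Int_commute)

lemma gsim_trans:
  assumes ok: "Rok R vi vt" and om: "\<omega>' \<in> Omega G R"
    and a: "gsim G R vi vt \<omega> \<omega>'" and b: "gsim G R vi vt \<omega>' \<omega>''"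
  shows "gsim G R vi vt \<omega> \<omega>''"
  unfolding gsim_def
proof
  fix n
  have s1: "sharevert G R vi vt (pre (Suc n) \<omega>) (pre (Suc n) \<omega>')"
    and s2: "sharevert G R vi vt (pre (Suc n) \<omega>') (pre (Suc n) \<omega>'')"
    using a b by (auto simp: gsim_def)
  have z: "snd \<omega>' n \<in> edges R" using om by (simp add: Omega_iff)
  have "sharevert G R vi vt (fst \<omega>, snd (pre n \<omega>)) (fst \<omega>'', snd (pre n \<omega>''))"
    by (rule share_step[OF ok z _ _ s1[unfolded pre_Suc] s2[unfolded pre_Suc]]) simp_all
  then show "sharevert G R vi vt (pre n \<omega>) (pre n \<omega>'')"
    by (simp add: pre_def)
qed

lemma in_cls: "\<omega> \<in> Omega G R \<Longrightarrow> \<omega> \<in> cls G R vi vt \<omega>"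
  by (simp add: cls_def gsim_refl)

lemma cls_eq_iff:
  assumes ok: "Rok R vi vt" and "\<omega>1 \<in> Omega G R" "\<omega>2 \<in> Omega G R"
  shows "cls G R vi vt \<omega>1 = cls G R vi vt \<omega>2 \<longleftrightarrow> gsim G R vi vt \<omega>1 \<omega>2"
proof
  assume "cls G R vi vt \<omega>1 = cls G R vi vt \<omega>2"
  then have "\<omega>2 \<in> cls G R vi vt \<omega>1" using in_cls[OF assms(3)] by simp
  then show "gsim G R vi vt \<omega>1 \<omega>2" by (simp add: cls_def)
next
  assume g: "gsim G R vi vt \<omega>1 \<omega>2"
  show "cls G R vi vt \<omega>1 = cls G R vi vt \<omega>2"
  proof (rule subset_antisym; rule subsetI)
    fix x assume "x \<in> cls G R vi vt \<omega>1"
    then show "x \<in> cls G R vi vt \<omega>2"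
      unfolding cls_def using gsim_sym[OF g] gsim_trans[OF ok assms(2), of \<omega>2 x] by auto
  next
    fix x assume "x \<in> cls G R vi vt \<omega>2"
    then show "x \<in> cls G R vi vt \<omega>1"
      unfolding cls_def using g gsim_trans[OF ok assms(3)] by auto
  qed
qed

lemma cls_in_Xsp: "\<omega> \<in> Omega G R \<Longrightarrow> cls G R vi vt \<omega> \<in> Xsp G R vi vt"
  by (simp add: Xsp_def)

lemma in_cls_gsim: "\<omega>' \<in> cls G R vi vt \<omega> \<Longrightarrow> gsim G R vi vt \<omega> \<omega>' \<and> \<omega>' \<in> Omega G R"
  by (simp add: cls_def)

section \<open>Topology\<close>

lemma topspace_Omega: "topspace (Omega_top G R) = Omega G R"
  by (simp add: Omega_top_def Omega_def PiE_UNIV_domain)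

lemma istopology_quot: "istopology (\<lambda>U. U \<subseteq> A \<and> openin X {x \<in> topspace X. q x \<in> U})"
proof -
  have e1: "\<And>S T. {x \<in> topspace X. q x \<in> S \<inter> T} = {x \<in> topspace X. q x \<in> S} \<inter> {x \<in> topspace X. q x \<in> T}"
    by auto
  have e2: "\<And>K. {x \<in> topspace X. q x \<in> \<Union>K} = \<Union> ((\<lambda>S. {x \<in> topspace X. q x \<in> S}) ` K)"
    by auto
  show ?thesis unfolding istopology_def e1 e2 by (auto intro!: openin_Int openin_Union)
qed

lemma istopology_X:
  "istopology (\<lambda>U. U \<subseteq> Xsp G R vi vt \<and>
      openin (Omega_top G R) {\<omega> \<in> topspace (Omega_top G R). cls G R vi vt \<omega> \<in> U})"
  by (rule istopology_quot)

lemma openin_Xtop: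
  "openin (Xtop G R vi vt) U \<longleftrightarrow> U \<subseteq> Xsp G R vi vt \<and>
      openin (Omega_top G R) {\<omega> \<in> Omega G R. cls G R vi vt \<omega> \<in> U}"
proof -
  have "openin (Xtop G R vi vt) = (\<lambda>U. U \<subseteq> Xsp G R vi vt \<and>
      openin (Omega_top G R) {\<omega> \<in> topspace (Omega_top G R). cls G R vi vt \<omega> \<in> U})"
    unfolding Xtop_def by (rule topology_inverse'[OF istopology_X])
  then show ?thesis by (simp add: topspace_Omega)
qed

lemma topspace_Xtop: "topspace (Xtop G R vi vt) = Xsp G R vi vt"
proof -
  have "openin (Xtop G R vi vt) (Xsp G R vi vt)"
    unfolding openin_Xtop
  proof
    have "{\<omega> \<in> Omega G R. cls G R vi vt \<omega> \<in> Xsp G R vi vt} = topspace (Omega_top G R)"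
      by (auto simp: topspace_Omega cls_in_Xsp)
    then show "openin (Omega_top G R) {\<omega> \<in> Omega G R. cls G R vi vt \<omega> \<in> Xsp G R vi vt}" by simp
  qed simp
  then have "Xsp G R vi vt \<subseteq> topspace (Xtop G R vi vt)" by (rule openin_subset)
  moreover have "topspace (Xtop G R vi vt) \<subseteq> Xsp G R vi vt"
    using openin_Xtop[of G R vi vt "topspace (Xtop G R vi vt)"] by simp
  ultimately show ?thesis by blast
qed

section \<open>Base maps\<close>

definition mv :: "('v \<Rightarrow> 'u) \<Rightarrow> ('e \<Rightarrow> 'd) \<Rightarrow> ('v + ('e \<times> 'r list \<times> 'w)) \<Rightarrow> ('u + ('d \<times> 'r list \<times> 'w))" where
  "mv \<phi>V \<phi>E c = (case c of Inl v \<Rightarrow> Inl (\<phi>V v) | Inr (e, Q, x) \<Rightarrow> Inr (\<phi>E e, Q, x))"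

lemma mv_simps [simp]: "mv \<phi>V \<phi>E (Inl v) = Inl (\<phi>V v)" "mv \<phi>V \<phi>E (Inr (e, Q, x)) = Inr (\<phi>E e, Q, x)"
  by (simp_all add: mv_def)

lemma stp_mv:
  "stp R vi vt (\<phi>E e) P (map_prod (mv \<phi>V \<phi>E) (mv \<phi>V \<phi>E) ab) z =
   map_prod (mv \<phi>V \<phi>E) (mv \<phi>V \<phi>E) (stp R vi vt e P ab z)"
  by (cases ab) (simp add: stp_def Let_def)

lemma iso_edge:
  assumes "graph_iso G1 G2 \<phi>V \<phi>E" "e \<in> edges G1"
  shows "\<phi>E e \<in> edges G2" "src G2 (\<phi>E e) = \<phi>V (src G1 e)" "tgt G2 (\<phi>E e) = \<phi>V (tgt G1 e)"
  using assms by (auto simp: graph_iso_def bij_betw_def)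

lemma ends_iso:
  assumes "graph_iso G1 G2 \<phi>V \<phi>E" "e \<in> edges G1"
  shows "ends G2 R vi vt (\<phi>E e, P) = map_prod (mv \<phi>V \<phi>E) (mv \<phi>V \<phi>E) (ends G1 R vi vt (e, P))"
proof (induction P rule: rev_induct)
  case Nil
  then show ?case using iso_edge[OF assms] by (simp add: ends_Nil)
next
  case (snoc z P)
  then show ?case by (simp add: ends_snoc stp_mv)
qed

definition Sv :: "('v, 'e) dgraph \<Rightarrow> ('v + ('e \<times> 'r list \<times> 'w)) set" where
  "Sv G = Inl ` verts G \<union> {Inr (a, Q, x) | a Q x. a \<in> edges G}"

lemma mv_inj:
  assumes "graph_iso G1 G2 \<phi>V \<phi>E"
  shows "inj_on (mv \<phi>V \<phi>E :: _ \<Rightarrow> ('u + ('d \<times> 'r list \<times> 'w))) (Sv G1 :: ('v + ('e \<times> 'r list \<times> 'w)) set)"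
proof (rule inj_onI)
  have iv: "inj_on \<phi>V (verts G1)" and ie: "inj_on \<phi>E (edges G1)"
    using assms unfolding graph_iso_def bij_betw_def by auto
  fix x y :: "'v + ('e \<times> 'r list \<times> 'w)"
  assume "x \<in> Sv G1" "y \<in> Sv G1" "mv \<phi>V \<phi>E x = (mv \<phi>V \<phi>E y :: ('u + ('d \<times> 'r list \<times> 'w)))"
  then show "x = y" unfolding Sv_def
    by (auto dest: inj_onD[OF iv] inj_onD[OF ie])
qed

lemma cps_ends_Sv:
  fixes G :: "('v, 'e) dgraph" and R :: "('w, 'r) dgraph"
  assumes "fin_graph G" "e \<in> edges G"
  shows "cps (ends G R vi vt (e, P)) \<subseteq> Sv G"
proof -
  have "src G e \<in> verts G" "tgt G e \<in> verts G" using assms unfolding fin_graph_def by auto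
  then show ?thesis using ends_form[of G R vi vt e P] assms(2) unfolding Sv_def by blast
qed

lemma cps_map: "cps (map_prod f f ab) = f ` cps ab"
  by (cases ab) (simp add: cps_def)

lemma sharevert_iso:
  fixes G1 :: "('v, 'e) dgraph" and G2 :: "('u, 'd) dgraph" and R :: "('w, 'r) dgraph"
  assumes "graph_iso G1 G2 \<phi>V \<phi>E" "fin_graph G1" "e \<in> edges G1" "e' \<in> edges G1"
  shows "sharevert G2 R vi vt (\<phi>E e, P) (\<phi>E e', P') \<longleftrightarrow> sharevert G1 R vi vt (e, P) (e', P')"
proof -
  have i: "inj_on (mv \<phi>V \<phi>E :: _ \<Rightarrow> ('u + ('d \<times> 'r list \<times> 'w))) (Sv G1 :: ('v + ('e \<times> 'r list \<times> 'w)) set)"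
    by (rule mv_inj[OF assms(1)])
  have s: "cps (ends G1 R vi vt (e, P)) \<subseteq> Sv G1" "cps (ends G1 R vi vt (e', P')) \<subseteq> Sv G1"
    by (rule cps_ends_Sv[OF assms(2,3)], rule cps_ends_Sv[OF assms(2,4)])
  have "mv \<phi>V \<phi>E ` cps (ends G1 R vi vt (e, P)) \<inter> mv \<phi>V \<phi>E ` cps (ends G1 R vi vt (e', P')) =
        mv \<phi>V \<phi>E ` (cps (ends G1 R vi vt (e, P)) \<inter> cps (ends G1 R vi vt (e', P')))"
    using inj_on_image_Int[OF i s] by simp
  then show ?thesis
    unfolding sharevert_cps ends_iso[OF assms(1,3)] ends_iso[OF assms(1,4)] cps_map by simp
qed

lemma loop_iso:
  fixes G1 :: "('v, 'e) dgraph" and G2 :: "('u, 'd) dgraph" and R :: "('w, 'r) dgraph"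
  assumes "graph_iso G1 G2 \<phi>V \<phi>E" "fin_graph G1" "e \<in> edges G1"
  shows "is_loopw G2 R vi vt (\<phi>E e, P) \<longleftrightarrow> is_loopw G1 R vi vt (e, P)"
proof -
  have i: "inj_on (mv \<phi>V \<phi>E :: _ \<Rightarrow> ('u + ('d \<times> 'r list \<times> 'w))) (Sv G1 :: ('v + ('e \<times> 'r list \<times> 'w)) set)"
    by (rule mv_inj[OF assms(1)])
  have s: "cps (ends G1 R vi vt (e, P)) \<subseteq> Sv G1"
    by (rule cps_ends_Sv[OF assms(2,3)])
  then have "fst (ends G1 R vi vt (e, P)) \<in> Sv G1" "snd (ends G1 R vi vt (e, P)) \<in> Sv G1"
    by (auto simp: cps_def)
  then show ?thesis
    unfolding is_loopw_def ends_iso[OF assms(1,3)] using i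
    by (cases "ends G1 R vi vt (e, P)") (auto simp: inj_on_def)
qed

definition Phi :: "('e \<Rightarrow> 'd) \<Rightarrow> 'e \<times> (nat \<Rightarrow> 'r) \<Rightarrow> 'd \<times> (nat \<Rightarrow> 'r)" where
  "Phi \<phi>E \<omega> = (\<phi>E (fst \<omega>), snd \<omega>)"

lemma pre_Phi: "pre n (Phi \<phi>E \<omega>) = (\<phi>E (fst \<omega>), snd (pre n \<omega>))"
  by (simp add: pre_def Phi_def)

lemma Phi_Omega:
  assumes "graph_iso G1 G2 \<phi>V \<phi>E" "\<omega> \<in> Omega G1 R"
  shows "Phi \<phi>E \<omega> \<in> Omega G2 R"
  using assms iso_edge(1)[OF assms(1)] by (simp add: Omega_iff Phi_def)

lemma gsim_iso:
  assumes "graph_iso G1 G2 \<phi>V \<phi>E" "fin_graph G1" "\<omega> \<in> Omega G1 R" "\<omega>' \<in> Omega G1 R"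
  shows "gsim G2 R vi vt (Phi \<phi>E \<omega>) (Phi \<phi>E \<omega>') \<longleftrightarrow> gsim G1 R vi vt \<omega> \<omega>'"
proof -
  have a: "fst \<omega> \<in> edges G1" "fst \<omega>' \<in> edges G1" using assms by (auto simp: Omega_iff)
  show ?thesis
    unfolding gsim_def pre_Phi
    by (simp add: pre_def sharevert_iso[OF assms(1,2) a])
qed

lemma base_map_cls:
  assumes ok: "Rok R vi vt" and iso: "graph_iso G1 G2 \<phi>V \<phi>E" and fg: "fin_graph G1"
    and om: "\<omega> \<in> Omega G1 R"
  shows "base_map G1 G2 R vi vt \<phi>E (cls G1 R vi vt \<omega>) = cls G2 R vi vt (Phi \<phi>E \<omega>)"
proof -
  define \<omega>0 where "\<omega>0 = (SOME \<omega>0. \<omega>0 \<in> cls G1 R vi vt \<omega>)"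
  have "\<omega>0 \<in> cls G1 R vi vt \<omega>" unfolding \<omega>0_def using in_cls[OF om] by (rule someI)
  then have g: "gsim G1 R vi vt \<omega> \<omega>0" and o0: "\<omega>0 \<in> Omega G1 R" by (auto simp: cls_def)
  have "cls G2 R vi vt (Phi \<phi>E \<omega>0) = cls G2 R vi vt (Phi \<phi>E \<omega>)"
    using cls_eq_iff[OF ok Phi_Omega[OF iso o0] Phi_Omega[OF iso om]] gsim_iso[OF iso fg o0 om]
      gsim_sym[OF g] by simp
  then show ?thesis unfolding base_map_def Let_def \<omega>0_def[symmetric] by (simp add: Phi_def)
qed

lemma Phi_cont:
  assumes "graph_iso G1 G2 \<phi>V \<phi>E"
  shows "continuous_map (Omega_top G1 R) (Omega_top G2 R) (Phi \<phi>E)"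
  unfolding Omega_top_def continuous_map_pairwise
proof
  have "fst \<circ> Phi \<phi>E = \<phi>E \<circ> fst" by (auto simp: Phi_def)
  moreover have "continuous_map (discrete_topology (edges G1)) (discrete_topology (edges G2)) \<phi>E"
    using iso_edge(1)[OF assms] by auto
  ultimately show "continuous_map
     (prod_topology (discrete_topology (edges G1)) (product_topology (\<lambda>_. discrete_topology (edges R)) UNIV))
     (discrete_topology (edges G2)) (fst \<circ> Phi \<phi>E)"
    using continuous_map_compose[OF continuous_map_fst] by metis
next
  have "snd \<circ> Phi \<phi>E = snd" by (auto simp: Phi_def)
  then show "continuous_map
     (prod_topology (discrete_topology (edges G1)) (product_topology (\<lambda>_. discrete_topology (edges R)) UNIV))
     (product_topology (\<lambda>_. discrete_topology (edges R)) UNIV) (snd \<circ> Phi \<phi>E)"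
    using continuous_map_snd by metis
qed

lemma base_map_in:
  assumes ok: "Rok R vi vt" and iso: "graph_iso G1 G2 \<phi>V \<phi>E" and fg: "fin_graph G1"
    and x: "x \<in> Xsp G1 R vi vt"
  shows "base_map G1 G2 R vi vt \<phi>E x \<in> Xsp G2 R vi vt"
proof -
  obtain \<omega> where om: "\<omega> \<in> Omega G1 R" and xe: "x = cls G1 R vi vt \<omega>" using x unfolding Xsp_def by blast
  show ?thesis unfolding xe base_map_cls[OF ok iso fg om] by (rule cls_in_Xsp[OF Phi_Omega[OF iso om]])
qed

lemma base_map_cont:
  assumes ok: "Rok R vi vt" and iso: "graph_iso G1 G2 \<phi>V \<phi>E" and fg: "fin_graph G1"
  shows "continuous_map (Xtop G1 R vi vt) (Xtop G2 R vi vt) (base_map G1 G2 R vi vt \<phi>E)"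
  unfolding continuous_map_def topspace_Xtop
proof (intro conjI allI impI)
  show "base_map G1 G2 R vi vt \<phi>E \<in> Xsp G1 R vi vt \<rightarrow> Xsp G2 R vi vt"
    using base_map_in[OF ok iso fg] by blast
next
  fix U assume "openin (Xtop G2 R vi vt) U"
  then have U: "U \<subseteq> Xsp G2 R vi vt" "openin (Omega_top G2 R) {\<omega> \<in> Omega G2 R. cls G2 R vi vt \<omega> \<in> U}"
    by (auto simp: openin_Xtop)
  have e: "{\<omega> \<in> Omega G1 R. cls G1 R vi vt \<omega> \<in> {x \<in> Xsp G1 R vi vt. base_map G1 G2 R vi vt \<phi>E x \<in> U}}
     = {\<omega> \<in> topspace (Omega_top G1 R). Phi \<phi>E \<omega> \<in> {\<omega> \<in> Omega G2 R. cls G2 R vi vt \<omega> \<in> U}}"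
    using base_map_cls[OF ok iso fg] Phi_Omega[OF iso] cls_in_Xsp by (auto simp: topspace_Omega)
  have "openin (Omega_top G1 R) {\<omega> \<in> topspace (Omega_top G1 R). Phi \<phi>E \<omega> \<in> {\<omega> \<in> Omega G2 R. cls G2 R vi vt \<omega> \<in> U}}"
    using Phi_cont[OF iso, of R] U(2) unfolding continuous_map_def by blast
  then show "openin (Xtop G1 R vi vt) {x \<in> Xsp G1 R vi vt. base_map G1 G2 R vi vt \<phi>E x \<in> U}"
    unfolding openin_Xtop e by auto
qed

lemma iso_inv:
  assumes iso: "graph_iso G1 G2 \<phi>V \<phi>E" and fg: "fin_graph G1"
  shows "graph_iso G2 G1 (inv_into (verts G1) \<phi>V) (inv_into (edges G1) \<phi>E)"
proof -
  have bv: "bij_betw \<phi>V (verts G1) (verts G2)" and be: "bij_betw \<phi>E (edges G1) (edges G2)"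
    using iso by (auto simp: graph_iso_def)
  have "src G1 (inv_into (edges G1) \<phi>E e') = inv_into (verts G1) \<phi>V (src G2 e') \<and>
        tgt G1 (inv_into (edges G1) \<phi>E e') = inv_into (verts G1) \<phi>V (tgt G2 e')" if e': "e' \<in> edges G2" for e'
  proof -
    define e where "e = inv_into (edges G1) \<phi>E e'"
    have e1: "e \<in> edges G1" "\<phi>E e = e'" using e' be unfolding e_def
      by (auto simp: bij_betw_def inv_into_into f_inv_into_f)
    have "src G1 e \<in> verts G1" "tgt G1 e \<in> verts G1" using fg e1 by (auto simp: fin_graph_def)
    then show ?thesis using iso_edge[OF iso e1(1)] e1 bv
      by (auto simp: bij_betw_def e_def[symmetric])
  qed
  then show ?thesis using bij_betw_inv_into[OF bv] bij_betw_inv_into[OF be]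
    by (simp add: graph_iso_def)
qed

lemma iso_fin:
  assumes iso: "graph_iso G1 G2 \<phi>V \<phi>E" and fg: "fin_graph G1"
  shows "fin_graph G2"
proof -
  have bv: "bij_betw \<phi>V (verts G1) (verts G2)" and be: "bij_betw \<phi>E (edges G1) (edges G2)"
    using iso by (auto simp: graph_iso_def)
  have "finite (verts G2)" "finite (edges G2)" using fg bij_betw_finite[OF bv] bij_betw_finite[OF be]
    by (auto simp: fin_graph_def)
  moreover have "src G2 e' \<in> verts G2 \<and> tgt G2 e' \<in> verts G2" if "e' \<in> edges G2" for e'
  proof -
    have "e' \<in> \<phi>E ` edges G1" using that be by (simp add: bij_betw_def)
    then obtain e where "e \<in> edges G1" "e' = \<phi>E e" by blast
    then show ?thesis using iso_edge[OF iso] fg bv by (auto simp: fin_graph_def bij_betw_def)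
  qed
  ultimately show ?thesis by (simp add: fin_graph_def)
qed

lemma base_map_inv:
  assumes ok: "Rok R vi vt" and iso: "graph_iso G1 G2 \<phi>V \<phi>E" and fg: "fin_graph G1"
    and x: "x \<in> Xsp G1 R vi vt"
  shows "base_map G2 G1 R vi vt (inv_into (edges G1) \<phi>E) (base_map G1 G2 R vi vt \<phi>E x) = x"
proof -
  obtain \<omega> where om: "\<omega> \<in> Omega G1 R" and xe: "x = cls G1 R vi vt \<omega>" using x unfolding Xsp_def by blast
  have be: "inj_on \<phi>E (edges G1)" using iso by (auto simp: graph_iso_def bij_betw_def)
  have "Phi (inv_into (edges G1) \<phi>E) (Phi \<phi>E \<omega>) = \<omega>"
    using om be by (auto simp: Phi_def Omega_iff)
  then show ?thesis unfolding xe
    using base_map_cls[OF ok iso fg om] base_map_cls[OF ok iso_inv[OF iso fg] iso_fin[OF iso fg] Phi_Omega[OF iso om]]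
    by simp
qed

lemma base_homeo:
  assumes ok: "Rok R vi vt" and iso: "graph_iso G1 G2 \<phi>V \<phi>E" and fg: "fin_graph G1"
  shows "homeomorphic_maps (Xtop G1 R vi vt) (Xtop G2 R vi vt) (base_map G1 G2 R vi vt \<phi>E)
           (base_map G2 G1 R vi vt (inv_into (edges G1) \<phi>E))"
proof -
  have iso': "graph_iso G2 G1 (inv_into (verts G1) \<phi>V) (inv_into (edges G1) \<phi>E)" by (rule iso_inv[OF iso fg])
  have fg2: "fin_graph G2" by (rule iso_fin[OF iso fg])
  have inv2: "inv_into (edges G2) (inv_into (edges G1) \<phi>E) e = \<phi>E e" if "e \<in> edges G1" for e
    using iso that by (auto simp: graph_iso_def bij_betw_def inv_into_inv_into_eq)
  have "base_map G1 G2 R vi vt \<phi>E (base_map G2 G1 R vi vt (inv_into (edges G1) \<phi>E) y) = y"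
    if y: "y \<in> Xsp G2 R vi vt" for y
  proof -
    have "base_map G1 G2 R vi vt (inv_into (edges G2) (inv_into (edges G1) \<phi>E)) (base_map G2 G1 R vi vt (inv_into (edges G1) \<phi>E) y) = y"
      by (rule base_map_inv[OF ok iso' fg2 y])
    moreover have "base_map G1 G2 R vi vt (inv_into (edges G2) (inv_into (edges G1) \<phi>E)) z = base_map G1 G2 R vi vt \<phi>E z"
      if zX: "z \<in> Xsp G1 R vi vt" for z
    proof -
      obtain \<omega> where om: "\<omega> \<in> Omega G1 R" and ze: "z = cls G1 R vi vt \<omega>" using zX unfolding Xsp_def by blast
      have "Phi (inv_into (edges G2) (inv_into (edges G1) \<phi>E)) \<omega> = Phi \<phi>E \<omega>"
        using inv2 om by (simp add: Phi_def Omega_iff)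
      then show ?thesis unfolding ze
        using base_map_cls[OF ok iso' fg2] base_map_cls[OF ok iso fg om] om
          base_map_cls[OF ok iso_inv[OF iso' fg2] iso_fin[OF iso' fg2] om]
        by simp
    qed
    ultimately show ?thesis using base_map_in[OF ok iso' fg2 y] by simp
  qed
  then show ?thesis
    unfolding homeomorphic_maps_def topspace_Xtop
    using base_map_cont[OF ok iso fg] base_map_cont[OF ok iso' fg2] base_map_inv[OF ok iso fg]
    by blast
qed

section \<open>Prefixes and deep points\<close>

lemma map_upt_eq: "map f [0..<length P] = P \<longleftrightarrow> (\<forall>i<length P. f i = P ! i)"
proof -
  have "map f [0..<length P] = P \<longleftrightarrow> (length (map f [0..<length P]) = length P \<and>
      (\<forall>i<length (map f [0..<length P]). map f [0..<length P] ! i = P ! i))"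
    by (rule list_eq_iff_nth_eq)
  also have "\<dots> \<longleftrightarrow> (\<forall>i<length P. f i = P ! i)"
    by (simp only: length_map length_upt diff_zero) (auto simp del: upt_Suc)
  finally show ?thesis .
qed

lemma has_prefix_iff:
  "has_prefix \<epsilon> \<omega> \<longleftrightarrow> fst \<omega> = fst \<epsilon> \<and> (\<forall>i<length (snd \<epsilon>). snd \<omega> i = snd \<epsilon> ! i)"
  by (cases \<epsilon>) (simp add: has_prefix_def pre_def map_upt_eq)

definition mk :: "'e \<times> 'r list \<Rightarrow> 'r \<Rightarrow> 'e \<times> (nat \<Rightarrow> 'r)" where
  "mk \<epsilon> z0 = (fst \<epsilon>, \<lambda>n. if n < length (snd \<epsilon>) then snd \<epsilon> ! n else z0)"

lemma mk_prefix: "has_prefix \<epsilon> (mk \<epsilon> z0)"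
  by (simp add: has_prefix_iff mk_def)

lemma mk_Omega: "\<epsilon> \<in> words G R \<Longrightarrow> z0 \<in> edges R \<Longrightarrow> mk \<epsilon> z0 \<in> Omega G R"
  by (auto simp: mk_def Omega_iff words_def)

lemma pre_prefix: "has_prefix (pre n \<omega>) \<omega>"
  by (simp add: has_prefix_def)

definition intv :: "'e \<Rightarrow> 'r list \<Rightarrow> ('v + ('e \<times> 'r list \<times> 'w)) \<Rightarrow> bool" where
  "intv e P c \<longleftrightarrow> (\<exists>Q x. c = Inr (e, Q, x) \<and> length P \<le> length Q \<and> take (length P) Q = P)"

lemma intv_stay:
  fixes R :: "('w, 'r) dgraph" and ab :: "('v + ('e \<times> 'r list \<times> 'w)) \<times> ('v + ('e \<times> 'r list \<times> 'w))"
  assumes "intv e P (fst ab)" "intv e P (snd ab)" "take (length P) P' = P" "length P \<le> length P'"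
  shows "intv e P (fst (stp R vi vt e P' ab z)) \<and> intv e P (snd (stp R vi vt e P' ab z))"
proof -
  have i: "intv e P (Inr (e, P', y) :: ('v + ('e \<times> 'r list \<times> 'w)))" for y unfolding intv_def using assms(3,4) by blast
  show ?thesis using assms(1,2) i unfolding stp_def Let_def by simp
qed

lemma intv_ends_app:
  fixes G :: "('v, 'e) dgraph" and R :: "('w, 'r) dgraph"
  assumes "intv e P (fst (ends G R vi vt (e, P @ p)))" "intv e P (snd (ends G R vi vt (e, P @ p)))"
  shows "intv e P (fst (ends G R vi vt (e, P @ p @ q))) \<and> intv e P (snd (ends G R vi vt (e, P @ p @ q)))"
proof (induction q rule: rev_induct)
  case Nil
  then show ?case using assms by simp
next
  case (snoc z q)
  have "ends G R vi vt (e, P @ p @ q @ [z]) = stp R vi vt e (P @ p @ q) (ends G R vi vt (e, P @ p @ q)) z"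
    using ends_snoc[of G R vi vt e "P @ p @ q" z] by simp
  then show ?case using intv_stay[of e P "ends G R vi vt (e, P @ p @ q)" "P @ p @ q" R vi vt z] snoc by simp
qed

definition Rexp :: "('w, 'r) dgraph \<Rightarrow> 'w \<Rightarrow> 'w \<Rightarrow> bool" where
  "Rexp R vi vt \<longleftrightarrow> Rok R vi vt \<and> fin_graph R \<and> no_isolated R \<and> vi \<in> verts R \<and> vt \<in> verts R \<and>
     (\<exists>x\<in>verts R. x \<noteq> vi \<and> x \<noteq> vt)"

lemma deep_suffix:
  fixes R :: "('w, 'r) dgraph"
  assumes "Rexp R vi vt"
  shows "\<exists>p. set p \<subseteq> edges R \<and> (\<forall>(G :: ('v, 'e) dgraph) e P.
      intv e P (fst (ends G R vi vt (e, P @ p))) \<and> intv e P (snd (ends G R vi vt (e, P @ p))))"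
proof -
  have ok: "Rok R vi vt" and nis: "no_isolated R" and vin: "vi \<in> verts R" "vt \<in> verts R"
    using assms by (auto simp: Rexp_def)
  have r: "vi \<noteq> vt" "\<And>z. z \<in> edges R \<Longrightarrow> \<not> (src R z = vi \<and> tgt R z = vt) \<and> \<not> (src R z = vt \<and> tgt R z = vi)"
    using ok by (auto simp: Rok_def)
  obtain x where x: "x \<in> verts R" "x \<noteq> vi" "x \<noteq> vt" using assms by (auto simp: Rexp_def)
  obtain zx where zx: "zx \<in> edges R" "src R zx = x \<or> tgt R zx = x" using nis x by (auto simp: no_isolated_def)
  obtain za where za: "za \<in> edges R" "src R za = vt \<or> tgt R za = vt" using nis vin by (auto simp: no_isolated_def)
  then have za': "src R za \<noteq> vi" "tgt R za \<noteq> vi" using r by auto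
  obtain zb where zb: "zb \<in> edges R" "src R zb = vi \<or> tgt R zb = vi" using nis vin by (auto simp: no_isolated_def)
  then have zb': "src R zb \<noteq> vt" "tgt R zb \<noteq> vt" using r by auto
  define p where "p = [zx, if src R zx = x then zb else za]"
  have "intv e P (fst (ends G R vi vt (e, P @ p))) \<and> intv e P (snd (ends G R vi vt (e, P @ p)))"
    for G :: "('v, 'e) dgraph" and e P
  proof -
    define ab where "ab = ends G R vi vt (e, P)"
    define ab1 where "ab1 = stp R vi vt e P ab zx"
    have e1: "ends G R vi vt (e, P @ [zx]) = ab1"
      unfolding ab1_def ab_def by (rule ends_snoc)
    have e2: "ends G R vi vt (e, P @ p) = stp R vi vt e (P @ [zx]) ab1 (if src R zx = x then zb else za)"
      using ends_snoc[of G R vi vt e "P @ [zx]"] e1 by (simp add: p_def)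
    show ?thesis
    proof (cases "src R zx = x")
      case True
      then have "fst ab1 = Inr (e, P, x)" using x by (simp add: ab1_def stp_def Let_def)
      then show ?thesis unfolding e2 using True zb' x
        by (auto simp: stp_def Let_def intv_def)
    next
      case False
      then have "tgt R zx = x" using zx by simp
      then have "snd ab1 = Inr (e, P, x)" using x by (simp add: ab1_def stp_def Let_def)
      then show ?thesis unfolding e2 using False za' x
        by (auto simp: stp_def Let_def intv_def)
    qed
  qed
  moreover have "set p \<subseteq> edges R" using zx za zb by (auto simp: p_def)
  ultimately show ?thesis by blast
qed

lemma deep_point:
  fixes G :: "('v, 'e) dgraph" and R :: "('w, 'r) dgraph"
  assumes ip: "intv e P (fst (ends G R vi vt (e, P @ p))) \<and> intv e P (snd (ends G R vi vt (e, P @ p)))"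
    and pr: "has_prefix (e, P @ p) \<omega>" and g: "gsim G R vi vt \<omega> \<omega>'"
  shows "has_prefix (e, P) \<omega>'"
proof -
  define n where "n = length (P @ p)"
  have pn: "pre n \<omega> = (e, P @ p)" using pr by (simp add: has_prefix_def n_def)
  have "sharevert G R vi vt (pre n \<omega>) (pre n \<omega>')" using g by (simp add: gsim_def)
  then obtain c where c1: "c \<in> cps (ends G R vi vt (e, P @ p))" and c2: "c \<in> cps (ends G R vi vt (pre n \<omega>'))"
    unfolding sharevert_cps pn by blast
  have "intv e P c" using c1 ip by (auto simp: cps_def)
  then obtain Q x where cQ: "c = Inr (e, Q, x)" "length P \<le> length Q" "take (length P) Q = P"
    by (auto simp: intv_def)
  have pw: "pre n \<omega>' = (fst \<omega>', map (snd \<omega>') [0..<n])" by (simp add: pre_def)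
  obtain Q' x' where "c = Inr (fst \<omega>', Q', x')" "length Q' < n" "take (length Q') (map (snd \<omega>') [0..<n]) = Q'"
    using ends_form'[of c G R vi vt "fst \<omega>'" "map (snd \<omega>') [0..<n]"] c2 cQ(1) unfolding pw by auto
  then have f: "fst \<omega>' = e" and q: "take (length Q) (map (snd \<omega>') [0..<n]) = Q" "length Q < n"
    using cQ by auto
  have "take (length P) (map (snd \<omega>') [0..<n]) = P"
    using q cQ by (metis min.absorb1 take_take)
  moreover have "length P \<le> n" using q cQ by simp
  ultimately have "map (snd \<omega>') [0..<length P] = P"
    by (metis take_map take_upt add_0 min.absorb1)
  then show ?thesis using f by (simp add: has_prefix_def pre_def)
qed

lemma deep_exists:
  fixes R :: "('w, 'r) dgraph"
  assumes "Rexp R vi vt"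
  shows "\<exists>p. set p \<subseteq> edges R \<and> (\<forall>(G :: ('v, 'e) dgraph) e P \<omega> \<omega>'.
      has_prefix (e, P @ p) \<omega> \<longrightarrow> gsim G R vi vt \<omega> \<omega>' \<longrightarrow> has_prefix (e, P) \<omega>')"
  using deep_suffix[OF assms] deep_point by metis

lemma expanding_R:
  assumes "expanding G0 R vi vt"
  shows "Rexp R vi vt" "Rok R vi vt" "fin_graph G0" "\<exists>z0. z0 \<in> edges R" "no_isolated G0"
proof -
  have fR: "finite (verts R)" "finite (edges R)" using assms by (auto simp: expanding_def fin_graph_def)
  have c3: "card (verts R) \<ge> 3" and c2: "card (edges R) \<ge> 2" using assms by (auto simp: expanding_def)
  have "\<exists>x\<in>verts R. x \<noteq> vi \<and> x \<noteq> vt"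
  proof (rule ccontr)
    assume "\<not> ?thesis"
    then have "verts R \<subseteq> {vi, vt}" by auto
    then have "card (verts R) \<le> card {vi, vt}" by (rule card_mono[rotated]) simp
    also have "\<dots> \<le> 2" by (simp add: card_insert_if)
    finally show False using c3 by simp
  qed
  then show "Rexp R vi vt" "Rok R vi vt" using assms by (auto simp: Rexp_def Rok_def expanding_def)
  show "fin_graph G0" "no_isolated G0" using assms by (auto simp: expanding_def)
  show "\<exists>z0. z0 \<in> edges R" using c2 by (cases "edges R = {}") auto
qed

definition isprefix :: "'e \<times> 'r list \<Rightarrow> 'e \<times> 'r list \<Rightarrow> bool" where
  "isprefix \<delta> w \<longleftrightarrow> (\<exists>u. w = (fst \<delta>, snd \<delta> @ u))"

lemma two_prefixes:
  assumes "has_prefix \<delta> \<omega>" "has_prefix w \<omega>" "length (snd \<delta>) \<le> length (snd w)"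
  shows "isprefix \<delta> w"
proof -
  have "fst \<delta> = fst w" using assms by (simp add: has_prefix_iff)
  moreover have "take (length (snd \<delta>)) (snd w) = snd \<delta>"
    using assms by (simp add: has_prefix_iff list_eq_iff_nth_eq)
  ultimately show ?thesis unfolding isprefix_def
    by (metis append_take_drop_id prod.collapse)
qed

lemma cover_prefix:
  fixes G :: "('v, 'e) dgraph" and R :: "('w, 'r) dgraph"
  assumes rexp: "Rexp R vi vt" and z0: "z0 \<in> edges R"
    and cov: "Xsp G R vi vt \<subseteq> (\<Union>\<delta>\<in>D. cell G R vi vt \<delta>)"
    and w: "w \<in> words G R" and len: "\<forall>\<delta>\<in>D. length (snd \<delta>) \<le> length (snd w)"
  shows "\<exists>\<delta>\<in>D. isprefix \<delta> w"
proof -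
  have ok: "Rok R vi vt" using rexp by (simp add: Rexp_def)
  obtain p where p: "set p \<subseteq> edges R" and deep0: "\<forall>(G :: ('v, 'e) dgraph) e P \<omega> \<omega>'.
      has_prefix (e, P @ p) \<omega> \<longrightarrow> gsim G R vi vt \<omega> \<omega>' \<longrightarrow> has_prefix (e, P) \<omega>'"
    using deep_exists[where 'v='v and 'e='e, OF rexp] by blast
  note deep = deep0[rule_format]
  define \<omega> where "\<omega> = mk (fst w, snd w @ p) z0"
  have om: "\<omega> \<in> Omega G R" unfolding \<omega>_def using w p z0 by (intro mk_Omega) (auto simp: words_def)
  have pr: "has_prefix (fst w, snd w @ p) \<omega>" unfolding \<omega>_def by (rule mk_prefix)
  have "cls G R vi vt \<omega> \<in> (\<Union>\<delta>\<in>D. cell G R vi vt \<delta>)" using cov cls_in_Xsp[OF om] by blast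
  then obtain \<delta> \<omega>1 where d: "\<delta> \<in> D" and o1: "\<omega>1 \<in> Omega G R" "has_prefix \<delta> \<omega>1"
    and eq: "cls G R vi vt \<omega> = cls G R vi vt \<omega>1"
    unfolding cell_def by blast
  have "gsim G R vi vt \<omega> \<omega>1" using eq cls_eq_iff[OF ok om o1(1)] by simp
  then have "has_prefix (fst w, snd w) \<omega>1" using deep[OF pr] by blast
  then have "isprefix \<delta> w" using two_prefixes[OF o1(2)] len d by simp
  then show ?thesis using d by blast
qed

section \<open>Disjoint interiors of same-level cells\<close>

lemma old_back:
  fixes G :: "('v, 'e) dgraph" and R :: "('w, 'r) dgraph"
  assumes "s \<in> cps (ends G R vi vt (e, P @ q))" "\<forall>Q x. s = Inr (e, Q, x) \<longrightarrow> length Q < length P"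
  shows "s \<in> cps (ends G R vi vt (e, P))"
  using assms(1)
proof (induction q rule: rev_induct)
  case Nil
  then show ?case by simp
next
  case (snoc z q)
  have "s \<in> cps (ends G R vi vt (e, P @ q)) \<union> {Inr (e, P @ q, x) | x. True}"
    using cps_ends_snoc[of G R vi vt e "P @ q" z] snoc.prems by auto
  moreover have "s \<notin> {Inr (e, P @ q, x) | x. True}" using assms(2) by auto
  ultimately show ?case using snoc.IH by blast
qed

lemma pre_app: "N \<le> m \<Longrightarrow> pre m \<omega> = (fst \<omega>, snd (pre N \<omega>) @ map (snd \<omega>) [N..<m])"
proof -
  assume "N \<le> m"
  then have "[0..<m] = [0..<N] @ [N..<m]" using upt_add_eq_append[of 0 N "m - N"] by simp
  then show ?thesis by (simp add: pre_def)
qed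

lemma take_pre: "N \<le> m \<Longrightarrow> take N (snd (pre m \<omega>)) = snd (pre N \<omega>)"
  by (simp add: pre_app[of N m \<omega>])

lemma interiors_disjoint:
  fixes G :: "('v, 'e) dgraph" and R :: "('w, 'r) dgraph"
  assumes ok: "Rok R vi vt" and l1: "length (snd w1) = N" and l2: "length (snd w2) = N" and ne: "w1 \<noteq> w2"
  shows "cell_interior G R vi vt w1 \<inter> cell_interior G R vi vt w2 = {}"
proof (rule ccontr)
  assume "cell_interior G R vi vt w1 \<inter> cell_interior G R vi vt w2 \<noteq> {}"
  then obtain x where x1: "x \<in> cell_interior G R vi vt w1" and x2: "x \<in> cell_interior G R vi vt w2" by blast
  obtain \<omega>1 where o1: "\<omega>1 \<in> Omega G R" "has_prefix w1 \<omega>1" "x = cls G R vi vt \<omega>1"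
    using x1 unfolding cell_interior_def cell_def by blast
  obtain \<omega>2 where o2: "\<omega>2 \<in> Omega G R" "has_prefix w2 \<omega>2" "x = cls G R vi vt \<omega>2"
    using x2 unfolding cell_interior_def cell_def by blast
  have g: "gsim G R vi vt \<omega>1 \<omega>2" using cls_eq_iff[OF ok o1(1) o2(1)] o1(3) o2(3) by simp
  have pw1: "pre N \<omega>1 = w1" and pw2: "pre N \<omega>2 = w2" using o1(2) o2(2) l1 l2 by (simp_all add: has_prefix_def)
  define B where "B = cps (ends G R vi vt w1)"
  define E where "E m = cps (ends G R vi vt (pre m \<omega>1))" for m
  have w1e: "w1 = (fst \<omega>1, snd (pre N \<omega>1))" using pw1 by (metis fst_pre prod.collapse)
  have oldB: "length Q < N" if "s \<in> B" "s = Inr (fst \<omega>1, Q, y)" for s Q y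
  proof -
    have "s \<in> cps (ends G R vi vt (fst \<omega>1, snd (pre N \<omega>1)))" using that(1) w1e unfolding B_def by simp
    then show ?thesis using ends_form'[of s G R vi vt "fst \<omega>1" "snd (pre N \<omega>1)"] that(2) by auto
  qed
  have C1: "\<exists>s\<in>B. s \<in> E m" if m: "N \<le> m" for m
  proof -
    have "sharevert G R vi vt (pre m \<omega>1) (pre m \<omega>2)" using g by (simp add: gsim_def)
    then obtain s where s1: "s \<in> E m" and s2: "s \<in> cps (ends G R vi vt (pre m \<omega>2))"
      unfolding sharevert_cps E_def by blast
    have old: "length Q < N" if sQ: "s = Inr (fst \<omega>1, Q, y)" for Q y
    proof (rule ccontr)
      assume "\<not> length Q < N"
      have p1: "pre m \<omega>1 = (fst \<omega>1, snd (pre m \<omega>1))" and p2: "pre m \<omega>2 = (fst \<omega>2, snd (pre m \<omega>2))"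
        by (simp_all add: pre_def)
      obtain Q1 y1 where q1: "s = Inr (fst \<omega>1, Q1, y1)" "take (length Q1) (snd (pre m \<omega>1)) = Q1"
        using ends_form'[of s G R vi vt "fst \<omega>1" "snd (pre m \<omega>1)"] s1 sQ unfolding E_def
        by (subst (asm) p1) auto
      obtain Q2 y2 where q2: "s = Inr (fst \<omega>2, Q2, y2)" "take (length Q2) (snd (pre m \<omega>2)) = Q2"
        using ends_form'[of s G R vi vt "fst \<omega>2" "snd (pre m \<omega>2)"] s2 sQ
        by (subst (asm) p2) auto
      have "Q1 = Q" "Q2 = Q" "fst \<omega>2 = fst \<omega>1" using q1(1) q2(1) sQ by auto
      then have "take N (snd (pre m \<omega>1)) = take N (snd (pre m \<omega>2))"
        using q1(2) q2(2) \<open>\<not> length Q < N\<close> by (metis min.absorb1 not_less take_take)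
      then have "snd w1 = snd w2" using take_pre[OF m] pw1 pw2 by metis
      moreover have "fst w1 = fst w2" using pw1 pw2 \<open>fst \<omega>2 = fst \<omega>1\<close> by auto
      ultimately show False using ne by (simp add: prod_eq_iff)
    qed
    have "s \<in> cps (ends G R vi vt (fst \<omega>1, snd (pre N \<omega>1) @ map (snd \<omega>1) [N..<m]))"
      using s1 unfolding E_def pre_app[OF m, of \<omega>1] .
    then have "s \<in> cps (ends G R vi vt (fst \<omega>1, snd (pre N \<omega>1)))"
      by (rule old_back) (use old in auto)
    then show ?thesis using s1 w1e unfolding B_def by auto
  qed
  have C2: "s \<in> E m'" if "s \<in> B" "N \<le> m'" "m' \<le> m" "s \<in> E m" for s m m'
  proof -
    have "s \<in> cps (ends G R vi vt (fst \<omega>1, snd (pre m' \<omega>1) @ map (snd \<omega>1) [m'..<m]))"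
      using that(4) unfolding E_def pre_app[OF that(3), of \<omega>1] .
    then have "s \<in> cps (ends G R vi vt (fst \<omega>1, snd (pre m' \<omega>1)))"
      by (rule old_back) (use oldB[OF that(1)] that(2) in fastforce)
    then show ?thesis unfolding E_def by (simp add: pre_def)
  qed
  have C3: "\<exists>s\<in>B. \<forall>m\<ge>N. s \<in> E m"
  proof (rule ccontr)
    assume "\<not> ?thesis"
    then have "\<forall>s\<in>B. \<exists>m\<ge>N. s \<notin> E m" by blast
    then obtain ma mb where ma: "ma \<ge> N" "fst (ends G R vi vt w1) \<notin> E ma"
      and mb: "mb \<ge> N" "snd (ends G R vi vt w1) \<notin> E mb" unfolding B_def cps_def by blast
    define m where "m = max ma mb"
    have "N \<le> m" using ma by (simp add: m_def)
    then obtain s where "s \<in> B" "s \<in> E m" using C1 by blast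
    then show False using C2[of s ma m] C2[of s mb m] ma mb unfolding B_def cps_def m_def by auto
  qed
  then obtain s where sB: "s \<in> B" and sE: "\<forall>m\<ge>N. s \<in> E m" by blast
  have "x \<in> vpoint G R vi vt s"
    unfolding vpoint_def o1(3) using o1(1) sE unfolding E_def cps_def by blast
  then show False using x1 sB unfolding cell_interior_def B_def cps_def by auto
qed

section \<open>Reprefixing\<close>

lemma fst_rp [simp]: "fst (reprefix \<epsilon> \<epsilon>' \<omega>) = fst \<epsilon>'"
  by (simp add: reprefix_def)

lemma snd_rp_tail: "snd (reprefix \<epsilon> \<epsilon>' \<omega>) (length (snd \<epsilon>') + j) = snd \<omega> (length (snd \<epsilon>) + j)"
  by (simp add: reprefix_def add.commute)

lemma rp_prefix: "has_prefix \<epsilon>' (reprefix \<epsilon> \<epsilon>' \<omega>)"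
  by (simp add: has_prefix_iff reprefix_def)

lemma prefix_app_iff:
  "has_prefix (a, P @ Q) \<omega> \<longleftrightarrow> has_prefix (a, P) \<omega> \<and> (\<forall>i<length Q. snd \<omega> (length P + i) = Q ! i)"
proof -
  have "(\<forall>i<length (P @ Q). snd \<omega> i = (P @ Q) ! i) \<longleftrightarrow>
        (\<forall>i<length P. snd \<omega> i = P ! i) \<and> (\<forall>i<length Q. snd \<omega> (length P + i) = Q ! i)"
  proof safe
    fix i assume "\<forall>i<length (P @ Q). snd \<omega> i = (P @ Q) ! i" "i < length P"
    then show "snd \<omega> i = P ! i" by (metis length_append nth_append trans_less_add1)
  next
    fix i assume "\<forall>i<length (P @ Q). snd \<omega> i = (P @ Q) ! i" "i < length Q"
    then show "snd \<omega> (length P + i) = Q ! i" by (metis length_append nat_add_left_cancel_less nth_append_length_plus)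
  next
    fix i assume a: "\<forall>i<length P. snd \<omega> i = P ! i" "\<forall>i<length Q. snd \<omega> (length P + i) = Q ! i"
      "i < length (P @ Q)"
    show "snd \<omega> i = (P @ Q) ! i"
    proof (cases "i < length P")
      case True then show ?thesis using a by (simp add: nth_append)
    next
      case False
      then obtain j where "i = length P + j" by (metis le_iff_add not_less)
      then show ?thesis using a by (simp add: nth_append)
    qed
  qed
  then show ?thesis by (simp add: has_prefix_iff)
qed

lemma rp_ext:
  assumes "has_prefix (fst \<epsilon>, snd \<epsilon> @ u) \<omega>"
  shows "has_prefix (fst \<epsilon>', snd \<epsilon>' @ u) (reprefix \<epsilon> \<epsilon>' \<omega>)"
  using assms rp_prefix[of \<epsilon>' \<epsilon> \<omega>] snd_rp_tail[of \<epsilon> \<epsilon>' \<omega>]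
  unfolding prefix_app_iff by (cases \<epsilon>') simp

lemma prefix_eq:
  assumes "has_prefix \<epsilon> \<omega>" "has_prefix \<epsilon> \<omega>'" "\<And>k. snd \<omega> (length (snd \<epsilon>) + k) = snd \<omega>' (length (snd \<epsilon>) + k)"
  shows "\<omega> = \<omega>'"
proof -
  have "snd \<omega> i = snd \<omega>' i" for i
  proof (cases "i < length (snd \<epsilon>)")
    case True then show ?thesis using assms(1,2) by (simp add: has_prefix_iff)
  next
    case False
    then obtain k where "i = length (snd \<epsilon>) + k" by (metis le_iff_add not_less)
    then show ?thesis using assms(3) by simp
  qed
  moreover have "fst \<omega> = fst \<omega>'" using assms(1,2) by (simp add: has_prefix_iff)
  ultimately show ?thesis by (simp add: prod_eq_iff fun_eq_iff)
qed

lemma rp_Omega: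
  assumes "\<epsilon>' \<in> words G' R" "\<omega> \<in> Omega G R"
  shows "reprefix \<epsilon> \<epsilon>' \<omega> \<in> Omega G' R"
  using assms by (auto simp: Omega_iff words_def reprefix_def)

lemma rp_roundtrip:
  assumes "has_prefix \<epsilon>' \<rho>"
  shows "reprefix \<epsilon> \<epsilon>' (reprefix \<epsilon>' \<epsilon> \<rho>) = \<rho>"
  by (rule prefix_eq[OF rp_prefix assms]) (simp add: snd_rp_tail[of \<epsilon> \<epsilon>', simplified add.commute] snd_rp_tail)

lemma Phi_prefix:
  "has_prefix (a, P) \<rho> \<Longrightarrow> has_prefix (\<phi>E a, P) (Phi \<phi>E \<rho>)"
  by (simp add: has_prefix_iff Phi_def)

lemma snd_Phi [simp]: "snd (Phi \<phi>E \<rho>) = snd \<rho>"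
  by (simp add: Phi_def)

lemma canon_apply:
  "canonical_on G G' R vi vt \<delta> \<delta>' f \<Longrightarrow> \<omega> \<in> Omega G R \<Longrightarrow> has_prefix \<delta> \<omega> \<Longrightarrow>
     f (cls G R vi vt \<omega>) = cls G' R vi vt (reprefix \<delta> \<delta>' \<omega>)"
  by (simp add: canonical_on_def)

lemma loop_ext:
  assumes ok: "Rok R vi vt" and eq: "is_loopw G R vi vt (a, P) = is_loopw G' R vi vt (a', P')"
    and u: "set u \<subseteq> edges R"
  shows "is_loopw G R vi vt (a, P @ u) = is_loopw G' R vi vt (a', P' @ u)"
proof (cases u rule: rev_cases)
  case Nil
  then show ?thesis using eq by simp
next
  case (snoc u' z)
  then have "z \<in> edges R" using u by auto
  then show ?thesis using loop_snoc[OF ok, of z G a "P @ u'"] loop_snoc[OF ok, of z G' a' "P' @ u'"] snoc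
    by simp
qed

section \<open>The composite is a rearrangement (cover)\<close>

lemma words_app: "(a, P) \<in> words G R \<Longrightarrow> set u \<subseteq> edges R \<Longrightarrow> (a, P @ u) \<in> words G R"
  by (simp add: words_def)

lemma finite_words_len:
  assumes "finite (edges G)" "finite (edges R)"
  shows "finite {w \<in> words G R. length (snd w) = N}"
proof -
  have "{w \<in> words G R. length (snd w) = N} \<subseteq> edges G \<times> {zs. set zs \<subseteq> edges R \<and> length zs = N}"
    by (auto simp: words_def)
  moreover have "finite (edges G \<times> {zs. set zs \<subseteq> edges R \<and> length zs = N})"
    using assms by (simp add: finite_lists_length_eq)
  ultimately show ?thesis by (rule finite_subset)
qed

lemma cell_sub: "cell G R vi vt \<epsilon> \<subseteq> Xsp G R vi vt"
  by (auto simp: cell_def Xsp_def)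

lemma compose_canon:
  fixes G0 :: "('v, 'e) dgraph" and G :: "('u, 'd) dgraph" and R :: "('w, 'r) dgraph"
  assumes ok: "Rok R vi vt" and rexp: "Rexp R vi vt" and z0: "z0 \<in> edges R"
    and fg0: "fin_graph G0" and fg: "fin_graph G" and iso: "graph_iso G G \<phi>V \<phi>E"
    and injf: "inj_on f (Xsp G0 R vi vt)" and surjf: "f ` Xsp G0 R vi vt = Xsp G R vi vt"
    and Df: "finite D" and Dw: "D \<subseteq> words G0 R" and cov: "(\<Union>\<delta>\<in>D. cell G0 R vi vt \<delta>) = Xsp G0 R vi vt"
    and cD: "\<And>\<delta>. \<delta> \<in> D \<Longrightarrow> c \<delta> \<in> words G R \<and> canonical_on G0 G R vi vt \<delta> (c \<delta>) f"
  shows "\<exists>Cov. finite Cov \<and> Cov \<subseteq> words G0 R \<and> (\<Union>\<epsilon>\<in>Cov. cell G0 R vi vt \<epsilon>) = Xsp G0 R vi vt \<and>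
        (\<forall>\<epsilon>1\<in>Cov. \<forall>\<epsilon>2\<in>Cov. \<epsilon>1 \<noteq> \<epsilon>2 \<longrightarrow>
            cell_interior G0 R vi vt \<epsilon>1 \<inter> cell_interior G0 R vi vt \<epsilon>2 = {}) \<and>
        (\<forall>w\<in>Cov. \<exists>t\<in>words G0 R. canonical_on G0 G0 R vi vt w t
            (\<lambda>x. inv_into (Xsp G0 R vi vt) f (base_map G G R vi vt \<phi>E (f x))))"
proof -
  define F where "F = (\<lambda>x. inv_into (Xsp G0 R vi vt) f (base_map G G R vi vt \<phi>E (f x)))"
  define M where "M = Max (insert 0 ((length \<circ> snd) ` D))"
  define M' where "M' = Max (insert 0 ((length \<circ> snd \<circ> c) ` D))"
  define N where "N = M + M'"
  define Cov where "Cov = {w \<in> words G0 R. length (snd w) = N}"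
  have fe: "finite (edges G0)" "finite (edges R)" using fg0 rexp by (auto simp: fin_graph_def Rexp_def)
  have lenD: "length (snd \<delta>) \<le> M" if "\<delta> \<in> D" for \<delta>
    unfolding M_def using Df that by (intro Max_ge) auto
  have lenD': "length (snd (c \<delta>)) \<le> M'" if "\<delta> \<in> D" for \<delta>
    unfolding M'_def using Df that by (intro Max_ge) auto
  have covG0: "Xsp G0 R vi vt \<subseteq> (\<Union>\<delta>\<in>D. cell G0 R vi vt \<delta>)" using cov by simp
  have covG: "Xsp G R vi vt \<subseteq> (\<Union>\<delta>'\<in>c ` D. cell G R vi vt \<delta>')"
  proof
    fix y assume "y \<in> Xsp G R vi vt"
    then obtain x where x: "x \<in> Xsp G0 R vi vt" "y = f x" using surjf by blast
    then obtain \<delta> where d: "\<delta> \<in> D" "x \<in> cell G0 R vi vt \<delta>" using cov by blast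
    then obtain \<omega> where om: "\<omega> \<in> Omega G0 R" "has_prefix \<delta> \<omega>" "x = cls G0 R vi vt \<omega>"
      unfolding cell_def by blast
    have "y = cls G R vi vt (reprefix \<delta> (c \<delta>) \<omega>)"
      using canon_apply[OF conjunct2[OF cD[OF d(1)]] om(1,2)] x om by simp
    moreover have "reprefix \<delta> (c \<delta>) \<omega> \<in> Omega G R" using rp_Omega cD[OF d(1)] om(1) by blast
    ultimately have "y \<in> cell G R vi vt (c \<delta>)" unfolding cell_def using rp_prefix by blast
    then show "y \<in> (\<Union>\<delta>'\<in>c ` D. cell G R vi vt \<delta>')" using d by blast
  qed
  have canon: "\<exists>t\<in>words G0 R. canonical_on G0 G0 R vi vt w t F" if w: "w \<in> Cov" for w
  proof -
    have ww: "w \<in> words G0 R" and lw: "length (snd w) = N" using w by (auto simp: Cov_def)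
    obtain \<delta> where d: "\<delta> \<in> D" "isprefix \<delta> w"
      using cover_prefix[OF rexp z0 covG0 ww] lenD lw unfolding N_def by fastforce
    then obtain u where we: "w = (fst \<delta>, snd \<delta> @ u)" by (auto simp: isprefix_def)
    have u: "set u \<subseteq> edges R" using ww we by (auto simp: words_def)
    have lu: "M' \<le> length u" using lw we lenD[OF d(1)] unfolding N_def by simp
    have cd: "c \<delta> \<in> words G R" and cand: "canonical_on G0 G R vi vt \<delta> (c \<delta>) f" using cD[OF d(1)] by auto
    define y2 where "y2 = (\<phi>E (fst (c \<delta>)), snd (c \<delta>) @ u)"
    have y2w: "y2 \<in> words G R" using cd u iso_edge(1)[OF iso] by (auto simp: y2_def words_def)
    have "\<forall>\<delta>'\<in>c ` D. length (snd \<delta>') \<le> length (snd y2)"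
      using lenD' lu by (force simp: y2_def)
    then obtain \<delta>2' where "\<delta>2' \<in> c ` D" "isprefix \<delta>2' y2"
      using cover_prefix[OF rexp z0 covG y2w] by blast
    then obtain \<delta>2 v where d2: "\<delta>2 \<in> D" and y2e: "y2 = (fst (c \<delta>2), snd (c \<delta>2) @ v)"
      by (auto simp: isprefix_def)
    have cd2: "c \<delta>2 \<in> words G R" and cand2: "canonical_on G0 G R vi vt \<delta>2 (c \<delta>2) f" using cD[OF d2] by auto
    define t where "t = (fst \<delta>2, snd \<delta>2 @ v)"
    have v: "set v \<subseteq> edges R" using y2w y2e by (auto simp: words_def)
    have "\<delta>2 \<in> words G0 R" using d2 Dw by blast
    then have tw: "t \<in> words G0 R" unfolding t_def using v by (auto simp: words_def)
    have lens: "length (snd (c \<delta>2)) + length v = length (snd (c \<delta>)) + length u"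
      using y2e by (simp add: y2_def prod_eq_iff) (metis length_append)
    have "is_loopw G0 R vi vt w = is_loopw G0 R vi vt t"
    proof -
      have "is_loopw G0 R vi vt w = is_loopw G R vi vt (fst (c \<delta>), snd (c \<delta>) @ u)"
        unfolding we using loop_ext[OF ok _ u, of G0 "fst \<delta>" "snd \<delta>" G "fst (c \<delta>)" "snd (c \<delta>)"] cand
        by (simp add: canonical_on_def)
      also have "\<dots> = is_loopw G R vi vt y2"
      proof -
        have "fst (c \<delta>) \<in> edges G" using cd by (auto simp: words_def)
        then show ?thesis unfolding y2_def using loop_iso[OF iso fg, of "fst (c \<delta>)" R vi vt] by simp
      qed
      also have "\<dots> = is_loopw G0 R vi vt t"
        unfolding y2e t_def using loop_ext[OF ok _ v, of G "fst (c \<delta>2)" "snd (c \<delta>2)" G0 "fst \<delta>2" "snd \<delta>2"] cand2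
        by (simp add: canonical_on_def)
      finally show ?thesis .
    qed
    moreover have "F (cls G0 R vi vt \<omega>) = cls G0 R vi vt (reprefix w t \<omega>)"
      if om: "\<omega> \<in> Omega G0 R" and pw: "has_prefix w \<omega>" for \<omega>
    proof -
      have pw': "has_prefix (fst \<delta>, snd \<delta> @ u) \<omega>" using pw we by simp
      have pd: "has_prefix \<delta> \<omega>" using pw' prefix_app_iff[of "fst \<delta>" "snd \<delta>" u \<omega>] by simp
      define \<rho>1 where "\<rho>1 = reprefix \<delta> (c \<delta>) \<omega>"
      have r1: "\<rho>1 \<in> Omega G R" unfolding \<rho>1_def by (rule rp_Omega[OF cd om])
      have f1: "f (cls G0 R vi vt \<omega>) = cls G R vi vt \<rho>1"
        unfolding \<rho>1_def by (rule canon_apply[OF cand om pd])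
      define \<rho>2 where "\<rho>2 = Phi \<phi>E \<rho>1"
      have r2: "\<rho>2 \<in> Omega G R" unfolding \<rho>2_def by (rule Phi_Omega[OF iso r1])
      have b2: "base_map G G R vi vt \<phi>E (cls G R vi vt \<rho>1) = cls G R vi vt \<rho>2"
        unfolding \<rho>2_def by (rule base_map_cls[OF ok iso fg r1])
      have p1: "has_prefix (fst (c \<delta>), snd (c \<delta>) @ u) \<rho>1" unfolding \<rho>1_def by (rule rp_ext[OF pw'])
      have p2: "has_prefix (fst (c \<delta>2), snd (c \<delta>2) @ v) \<rho>2"
        using Phi_prefix[OF p1, of \<phi>E] y2e unfolding \<rho>2_def y2_def by simp
      have p2': "has_prefix (c \<delta>2) \<rho>2"
        using p2 prefix_app_iff[of "fst (c \<delta>2)" "snd (c \<delta>2)" v \<rho>2] by simp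
      define \<rho>3 where "\<rho>3 = reprefix (c \<delta>2) \<delta>2 \<rho>2"
      have r3: "\<rho>3 \<in> Omega G0 R" unfolding \<rho>3_def using rp_Omega[OF _ r2] d2 Dw by blast
      have p3: "has_prefix \<delta>2 \<rho>3" unfolding \<rho>3_def by (rule rp_prefix)
      have "f (cls G0 R vi vt \<rho>3) = cls G R vi vt (reprefix \<delta>2 (c \<delta>2) \<rho>3)"
        by (rule canon_apply[OF cand2 r3 p3])
      also have "reprefix \<delta>2 (c \<delta>2) \<rho>3 = \<rho>2" unfolding \<rho>3_def by (rule rp_roundtrip[OF p2'])
      finally have f3: "f (cls G0 R vi vt \<rho>3) = cls G R vi vt \<rho>2" .
      have inv3: "inv_into (Xsp G0 R vi vt) f (cls G R vi vt \<rho>2) = cls G0 R vi vt \<rho>3"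
        using inv_into_f_eq[OF injf cls_in_Xsp[OF r3] f3] .
      have pt3: "has_prefix t \<rho>3" unfolding \<rho>3_def t_def by (rule rp_ext[OF p2])
      have "\<rho>3 = reprefix w t \<omega>"
      proof (rule prefix_eq[OF pt3 rp_prefix])
        fix k
        have "snd \<rho>3 (length (snd t) + k) = snd \<rho>3 (length (snd \<delta>2) + (length v + k))"
          by (simp add: t_def add.assoc)
        also have "\<dots> = snd \<rho>2 (length (snd (c \<delta>2)) + (length v + k))"
          unfolding \<rho>3_def by (rule snd_rp_tail)
        also have "\<dots> = snd \<rho>1 (length (snd (c \<delta>)) + (length u + k))"
          using lens by (simp add: \<rho>2_def add.assoc[symmetric])
        also have "\<dots> = snd \<omega> (length (snd \<delta>) + (length u + k))"
          unfolding \<rho>1_def by (rule snd_rp_tail)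
        also have "\<dots> = snd (reprefix w t \<omega>) (length (snd t) + k)"
          using snd_rp_tail[of w t \<omega> k] we by (simp add: add.assoc)
        finally show "snd \<rho>3 (length (snd t) + k) = snd (reprefix w t \<omega>) (length (snd t) + k)" .
      qed
      then show ?thesis unfolding F_def f1 b2 inv3 by simp
    qed
    ultimately have "canonical_on G0 G0 R vi vt w t F" by (simp add: canonical_on_def)
    then show ?thesis using tw by blast
  qed
  have fin: "finite Cov" unfolding Cov_def by (rule finite_words_len[OF fe])
  have sub: "Cov \<subseteq> words G0 R" by (auto simp: Cov_def)
  have un: "(\<Union>\<epsilon>\<in>Cov. cell G0 R vi vt \<epsilon>) = Xsp G0 R vi vt"
  proof
    show "(\<Union>\<epsilon>\<in>Cov. cell G0 R vi vt \<epsilon>) \<subseteq> Xsp G0 R vi vt" by (intro UN_least cell_sub)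
  next
    show "Xsp G0 R vi vt \<subseteq> (\<Union>\<epsilon>\<in>Cov. cell G0 R vi vt \<epsilon>)"
    proof
      fix x assume "x \<in> Xsp G0 R vi vt"
      then obtain \<omega> where om: "\<omega> \<in> Omega G0 R" "x = cls G0 R vi vt \<omega>" unfolding Xsp_def by blast
      have "pre N \<omega> \<in> Cov" using om(1) by (auto simp: Cov_def words_def Omega_iff pre_def)
      moreover have "x \<in> cell G0 R vi vt (pre N \<omega>)" unfolding cell_def using om pre_prefix by blast
      ultimately show "x \<in> (\<Union>\<epsilon>\<in>Cov. cell G0 R vi vt \<epsilon>)" by blast
    qed
  qed
  have dis: "\<forall>\<epsilon>1\<in>Cov. \<forall>\<epsilon>2\<in>Cov. \<epsilon>1 \<noteq> \<epsilon>2 \<longrightarrow>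
            cell_interior G0 R vi vt \<epsilon>1 \<inter> cell_interior G0 R vi vt \<epsilon>2 = {}"
  proof (intro ballI impI)
    fix \<epsilon>1 \<epsilon>2 assume "\<epsilon>1 \<in> Cov" "\<epsilon>2 \<in> Cov" "\<epsilon>1 \<noteq> \<epsilon>2"
    then show "cell_interior G0 R vi vt \<epsilon>1 \<inter> cell_interior G0 R vi vt \<epsilon>2 = {}"
      using interiors_disjoint[OF ok, of \<epsilon>1 N \<epsilon>2 G0] by (simp add: Cov_def)
  qed
  have canon': "\<forall>w\<in>Cov. \<exists>t\<in>words G0 R. canonical_on G0 G0 R vi vt w t F" using canon by blast
  show ?thesis unfolding F_def[symmetric]
    by (rule exI[of _ Cov], intro conjI fin sub un dis canon')
qed

lemma iso_compose:
  assumes i1: "graph_iso G G a b" and i2: "graph_iso G G c d" and fg: "fin_graph G"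
  shows "graph_iso G G (compose (verts G) a c) (compose (edges G) b d)"
proof -
  have bv: "bij_betw (compose (verts G) a c) (verts G) (verts G)"
    using bij_betw_trans[of c "verts G" "verts G" a "verts G"] i1 i2
    by (auto simp: graph_iso_def compose_def intro: bij_betw_cong[THEN iffD1, rotated])
  have be: "bij_betw (compose (edges G) b d) (edges G) (edges G)"
    using bij_betw_trans[of d "edges G" "edges G" b "edges G"] i1 i2
    by (auto simp: graph_iso_def compose_def intro: bij_betw_cong[THEN iffD1, rotated])
  have "src G (compose (edges G) b d e) = compose (verts G) a c (src G e) \<and>
        tgt G (compose (edges G) b d e) = compose (verts G) a c (tgt G e)" if e: "e \<in> edges G" for e
  proof -
    have de: "d e \<in> edges G" by (rule iso_edge(1)[OF i2 e])
    have "src G e \<in> verts G" "tgt G e \<in> verts G" using fg e by (auto simp: fin_graph_def)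
    then show ?thesis using iso_edge[OF i1 de] iso_edge[OF i2 e] e by (simp add: compose_def)
  qed
  then show ?thesis using bv be by (simp add: graph_iso_def)
qed

lemma iso_cong:
  assumes "graph_iso G H a b" "\<And>v. v \<in> verts G \<Longrightarrow> a' v = a v" "\<And>e. e \<in> edges G \<Longrightarrow> b' e = b e"
    and "fin_graph G"
  shows "graph_iso G H a' b'"
proof -
  have "bij_betw a' (verts G) (verts H)" "bij_betw b' (edges G) (edges H)"
    using assms(1) bij_betw_cong[of "verts G" a' a] bij_betw_cong[of "edges G" b' b] assms(2,3)
    by (auto simp: graph_iso_def)
  moreover have "\<forall>e\<in>edges G. src H (b' e) = a' (src G e) \<and> tgt H (b' e) = a' (tgt G e)"
    using assms by (auto simp: graph_iso_def fin_graph_def)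
  ultimately show ?thesis by (simp add: graph_iso_def)
qed

lemma base_map_cong:
  assumes x: "x \<in> Xsp G1 R vi vt" and eq: "\<And>e. e \<in> edges G1 \<Longrightarrow> \<phi>E e = \<phi>E' e"
  shows "base_map G1 G2 R vi vt \<phi>E x = base_map G1 G2 R vi vt \<phi>E' x"
proof -
  obtain \<omega> where om: "\<omega> \<in> Omega G1 R" "x = cls G1 R vi vt \<omega>" using x unfolding Xsp_def by blast
  have "(SOME \<omega>. \<omega> \<in> x) \<in> x" using in_cls[OF om(1)] om(2) by (metis someI)
  then have "fst (SOME \<omega>. \<omega> \<in> x) \<in> edges G1" using om(2) by (auto simp: cls_def Omega_iff)
  then show ?thesis unfolding base_map_def Let_def using eq by simp
qed

lemma canonical_cong:
  assumes "\<And>x. x \<in> Xsp G R vi vt \<Longrightarrow> f x = g x"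
  shows "canonical_on G G' R vi vt \<delta> \<delta>' f = canonical_on G G' R vi vt \<delta> \<delta>' g"
  using assms cls_in_Xsp unfolding canonical_on_def by metis

lemma iso_sym_gen:
  assumes h: "h \<in> iso G H" and cl: "\<And>x y. x \<in> carrier G \<Longrightarrow> y \<in> carrier G \<Longrightarrow> x \<otimes>\<^bsub>G\<^esub> y \<in> carrier G"
  shows "inv_into (carrier G) h \<in> iso H G"
proof -
  have h: "h \<in> hom G H" "bij_betw h (carrier G) (carrier H)"
    using h by (auto simp add: iso_def)
  then have HG: "bij_betw (inv_into (carrier G) h) (carrier H) (carrier G)"
    by (simp add: bij_betw_inv_into)
  have "inv_into (carrier G) h \<in> hom H G"
    unfolding hom_def
  proof safe
    show *: "\<And>x. x \<in> carrier H \<Longrightarrow> inv_into (carrier G) h x \<in> carrier G"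
      by (meson HG bij_betwE)
    show "inv_into (carrier G) h (x \<otimes>\<^bsub>H\<^esub> y) = inv_into (carrier G) h x \<otimes>\<^bsub>G\<^esub> inv_into (carrier G) h y"
      if "x \<in> carrier H" "y \<in> carrier H" for x y
    proof (rule inv_into_f_eq)
      show "inj_on h (carrier G)"
        using bij_betw_def h(2) by blast
      show "inv_into (carrier G) h x \<otimes>\<^bsub>G\<^esub> inv_into (carrier G) h y \<in> carrier G"
        by (simp add: * that cl)
      show "h (inv_into (carrier G) h x \<otimes>\<^bsub>G\<^esub> inv_into (carrier G) h y) = x \<otimes>\<^bsub>H\<^esub> y"
        using h bij_betw_inv_into_right [of h] unfolding hom_def by (simp add: "*" that cl)
    qed
  qed
  then show ?thesis
    by (simp add: iso_def bij_betw_inv_into h)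
qed

lemma aut_closed:
  assumes "x \<in> carrier (aut_group G)" "y \<in> carrier (aut_group G)" "fin_graph G"
  shows "x \<otimes>\<^bsub>aut_group G\<^esub> y \<in> carrier (aut_group G)"
  using assms iso_compose[of G "fst x" "snd x" "fst y" "snd y"]
  by (auto simp: aut_group_def compose_extensional)

lemma aut_finite:
  assumes "fin_graph G"
  shows "finite (carrier (aut_group G))"
proof -
  have "carrier (aut_group G) \<subseteq> (PiE (verts G) (\<lambda>_. verts G)) \<times> (PiE (edges G) (\<lambda>_. edges G))"
    by (auto simp: aut_group_def graph_iso_def bij_betw_def PiE_def Pi_def)
  moreover have "finite ((PiE (verts G) (\<lambda>_. verts G)) \<times> (PiE (edges G) (\<lambda>_. edges G)))"
    using assms by (simp add: fin_graph_def finite_PiE)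
  ultimately show ?thesis by (rule finite_subset)
qed

theorem proposition3p10:
  fixes G0 :: "('v, 'e) dgraph" and R :: "('w, 'r) dgraph" and vi vt :: 'w
    and G :: "('u, 'd) dgraph"
    and f :: "('e \<times> (nat \<Rightarrow> 'r)) set \<Rightarrow> ('d \<times> (nat \<Rightarrow> 'r)) set"
  assumes "expanding G0 R vi vt"
    and "fin_graph G" and "no_isolated G"
    and "rearrangement G0 G R vi vt f"
  shows "finite (stabilizer G0 R vi vt G f) \<and>
         (rearr_group G0 R vi vt)\<lparr>carrier := stabilizer G0 R vi vt G f\<rparr> \<cong> aut_group G"
proof -
  note exp = assms(1) and fg = assms(2) and nisG = assms(3) and rf = assms(4)
  have rexp: "Rexp R vi vt" and ok: "Rok R vi vt" and fg0: "fin_graph G0"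
    using expanding_R[OF exp] by auto
  obtain z0 where z0: "z0 \<in> edges R" using expanding_R[OF exp] by blast
  define X0 where "X0 = Xsp G0 R vi vt"
  define X where "X = Xsp G R vi vt"
  have hf: "homeomorphic_map (Xtop G0 R vi vt) (Xtop G R vi vt) f" using rf by (simp add: rearrangement_def)
  have "\<exists>Cov. finite Cov \<and> Cov \<subseteq> words G0 R \<and>
        (\<Union>\<epsilon>\<in>Cov. cell G0 R vi vt \<epsilon>) = Xsp G0 R vi vt \<and>
        (\<forall>\<epsilon>1\<in>Cov. \<forall>\<epsilon>2\<in>Cov. \<epsilon>1 \<noteq> \<epsilon>2 \<longrightarrow>
            cell_interior G0 R vi vt \<epsilon>1 \<inter> cell_interior G0 R vi vt \<epsilon>2 = {}) \<and>
        (\<forall>\<epsilon>\<in>Cov. \<exists>\<epsilon>'\<in>words G R. canonical_on G0 G R vi vt \<epsilon> \<epsilon>' f)"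
    using rf unfolding rearrangement_def by (rule conjunct2)
  then obtain D where Df: "finite D" and Dw: "D \<subseteq> words G0 R" and cov0: "(\<Union>\<delta>\<in>D. cell G0 R vi vt \<delta>) = Xsp G0 R vi vt"
    and cD0: "\<forall>\<delta>\<in>D. \<exists>\<delta>'\<in>words G R. canonical_on G0 G R vi vt \<delta> \<delta>' f"
    by (elim exE conjE) (rule that)
  have cov: "(\<Union>\<delta>\<in>D. cell G0 R vi vt \<delta>) = X0" using cov0 by (simp add: X0_def)
  obtain c where cD: "\<And>\<delta>. \<delta> \<in> D \<Longrightarrow> c \<delta> \<in> words G R \<and> canonical_on G0 G R vi vt \<delta> (c \<delta>) f"
  proof -
    have "\<forall>\<delta>\<in>D. \<exists>\<delta>'. \<delta>' \<in> words G R \<and> canonical_on G0 G R vi vt \<delta> \<delta>' f" using cD0 by blast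
    from bchoice[OF this] obtain c' where "\<forall>\<delta>\<in>D. c' \<delta> \<in> words G R \<and> canonical_on G0 G R vi vt \<delta> (c' \<delta>) f" ..
    then show ?thesis using that by blast
  qed
  have injf: "inj_on f X0" using homeomorphic_imp_injective_map[OF hf] by (simp add: topspace_Xtop X0_def)
  have surjf: "f ` X0 = X" using homeomorphic_imp_surjective_map[OF hf] by (simp add: topspace_Xtop X0_def X_def)
  define finv where "finv = inv_into X0 f"
  have finv_in: "finv y \<in> X0" if "y \<in> X" for y
    unfolding finv_def by (rule inv_into_into) (use that surjf in simp)
  have f_finv: "f (finv y) = y" if "y \<in> X" for y
    unfolding finv_def by (rule f_inv_into_f) (use that surjf in simp)
  have finv_f: "finv (f x) = x" if "x \<in> X0" for x
    unfolding finv_def by (rule inv_into_f_f[OF injf that])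
  have fin_X: "f x \<in> X" if "x \<in> X0" for x using that surjf by blast
  have hfinv: "homeomorphic_map (Xtop G R vi vt) (Xtop G0 R vi vt) finv"
  proof -
    obtain g where g: "homeomorphic_maps (Xtop G0 R vi vt) (Xtop G R vi vt) f g"
      using hf homeomorphic_map_maps by blast
    then have hg: "homeomorphic_map (Xtop G R vi vt) (Xtop G0 R vi vt) g"
      and gf: "\<forall>y\<in>X. f (g y) = y"
      by (auto simp: homeomorphic_maps_map topspace_Xtop X_def)
    have "g ` X = X0" using homeomorphic_imp_surjective_map[OF hg] by (simp add: topspace_Xtop X_def X0_def)
    then have "finv y = g y" if "y \<in> X" for y
      using that gf unfolding finv_def by (metis image_eqI inv_into_f_eq injf)
    then show ?thesis by (intro homeomorphic_map_eq[OF hg]) (simp add: topspace_Xtop X_def)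
  qed
  define Aut where "Aut = aut_group G"
  define St where "St = (rearr_group G0 R vi vt)\<lparr>carrier := stabilizer G0 R vi vt G f\<rparr>"
  define b where "b = (\<lambda>\<phi>E. base_map G G R vi vt \<phi>E)"
  define H where "H = (\<lambda>\<phi> :: ('u \<Rightarrow> 'u) \<times> ('d \<Rightarrow> 'd). restrict (\<lambda>x. finv (b (snd \<phi>) (f x))) X0)"
  have autI: "graph_iso G G (fst \<phi>) (snd \<phi>)" "fst \<phi> \<in> extensional (verts G)" "snd \<phi> \<in> extensional (edges G)"
    if "\<phi> \<in> carrier Aut" for \<phi>
    using that by (auto simp: Aut_def aut_group_def)
  have b_in: "b \<phi>E y \<in> X" if "graph_iso G G \<phi>V \<phi>E" "y \<in> X" for \<phi>V \<phi>E y
    using base_map_in[OF ok that(1) fg] that(2) unfolding b_def X_def by blast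
  have H_rearr: "H \<phi> \<in> carrier (rearr_group G0 R vi vt)" if phi: "\<phi> \<in> carrier Aut" for \<phi>
  proof -
    have iso: "graph_iso G G (fst \<phi>) (snd \<phi>)" using autI[OF phi] by simp
    have hb: "homeomorphic_map (Xtop G R vi vt) (Xtop G R vi vt) (b (snd \<phi>))"
      using homeomorphic_maps_imp_map[OF base_homeo[OF ok iso fg]] unfolding b_def .
    have "homeomorphic_map (Xtop G0 R vi vt) (Xtop G0 R vi vt) (finv \<circ> (b (snd \<phi>) \<circ> f))"
      by (rule homeomorphic_map_compose[OF homeomorphic_map_compose[OF hf hb] hfinv])
    then have hH: "homeomorphic_map (Xtop G0 R vi vt) (Xtop G0 R vi vt) (H \<phi>)"
      by (rule homeomorphic_map_eq) (simp add: H_def topspace_Xtop X0_def)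
    have ex: "\<exists>Cov. finite Cov \<and> Cov \<subseteq> words G0 R \<and> (\<Union>\<epsilon>\<in>Cov. cell G0 R vi vt \<epsilon>) = Xsp G0 R vi vt \<and>
        (\<forall>\<epsilon>1\<in>Cov. \<forall>\<epsilon>2\<in>Cov. \<epsilon>1 \<noteq> \<epsilon>2 \<longrightarrow>
            cell_interior G0 R vi vt \<epsilon>1 \<inter> cell_interior G0 R vi vt \<epsilon>2 = {}) \<and>
        (\<forall>w\<in>Cov. \<exists>t\<in>words G0 R. canonical_on G0 G0 R vi vt w t
            (\<lambda>x. inv_into (Xsp G0 R vi vt) f (base_map G G R vi vt (snd \<phi>) (f x))))"
      by (rule compose_canon[where c=c, OF ok rexp z0 fg0 fg iso injf[unfolded X0_def] surjf[unfolded X0_def X_def] Df Dw cov0])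
        (rule cD)
    obtain Cov where C: "finite Cov" "Cov \<subseteq> words G0 R" "(\<Union>\<epsilon>\<in>Cov. cell G0 R vi vt \<epsilon>) = Xsp G0 R vi vt"
        "\<forall>\<epsilon>1\<in>Cov. \<forall>\<epsilon>2\<in>Cov. \<epsilon>1 \<noteq> \<epsilon>2 \<longrightarrow> cell_interior G0 R vi vt \<epsilon>1 \<inter> cell_interior G0 R vi vt \<epsilon>2 = {}"
        and Cc: "\<forall>w\<in>Cov. \<exists>t\<in>words G0 R. canonical_on G0 G0 R vi vt w t
            (\<lambda>x. inv_into (Xsp G0 R vi vt) f (base_map G G R vi vt (snd \<phi>) (f x)))"
      using ex by (elim exE conjE) (rule that)
    have "canonical_on G0 G0 R vi vt w t (\<lambda>x. inv_into (Xsp G0 R vi vt) f (base_map G G R vi vt (snd \<phi>) (f x)))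
        = canonical_on G0 G0 R vi vt w t (H \<phi>)" for w t
      by (rule canonical_cong) (simp add: H_def X0_def finv_def b_def)
    then have "\<forall>w\<in>Cov. \<exists>t\<in>words G0 R. canonical_on G0 G0 R vi vt w t (H \<phi>)" using Cc by simp
    then have "rearrangement G0 G0 R vi vt (H \<phi>)"
      unfolding rearrangement_def by (intro conjI hH exI[of _ Cov] C)
    moreover have "H \<phi> \<in> extensional X0" by (simp add: H_def)
    ultimately show ?thesis by (simp add: rearr_group_def X0_def)
  qed
  have H_stab: "H \<phi> \<in> stabilizer G0 R vi vt G f" if phi: "\<phi> \<in> carrier Aut" for \<phi>
  proof -
    have iso: "graph_iso G G (fst \<phi>) (snd \<phi>)" using autI[OF phi] by simp
    have iso': "graph_iso G G (inv_into (verts G) (fst \<phi>)) (inv_into (edges G) (snd \<phi>))"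
      by (rule iso_inv[OF iso fg])
    have "f x = base_map G G R vi vt (inv_into (edges G) (snd \<phi>)) (compose X0 f (H \<phi>) x)" if x: "x \<in> X0" for x
    proof -
      have "compose X0 f (H \<phi>) x = b (snd \<phi>) (f x)"
        using x f_finv b_in[OF iso fin_X[OF x]] by (simp add: compose_def H_def)
      then show ?thesis using base_map_inv[OF ok iso fg fin_X[OF x, unfolded X_def]] unfolding b_def by simp
    qed
    then have "range_equiv G0 R vi vt G (compose X0 f (H \<phi>)) G f"
      unfolding range_equiv_def X0_def using iso' by blast
    then show ?thesis using H_rearr[OF phi] by (simp add: stabilizer_def X0_def)
  qed
  have b_comp: "b (compose (edges G) \<phi>E \<psi>E) y = b \<phi>E (b \<psi>E y)"
    if i1: "graph_iso G G \<phi>V \<phi>E" and i2: "graph_iso G G \<psi>V \<psi>E" and y: "y \<in> X" for \<phi>V \<phi>E \<psi>V \<psi>E y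
  proof -
    obtain \<omega> where om: "\<omega> \<in> Omega G R" "y = cls G R vi vt \<omega>" using y unfolding X_def Xsp_def by blast
    have i12: "graph_iso G G (compose (verts G) \<phi>V \<psi>V) (compose (edges G) \<phi>E \<psi>E)"
      by (rule iso_compose[OF i1 i2 fg])
    have "Phi (compose (edges G) \<phi>E \<psi>E) \<omega> = Phi \<phi>E (Phi \<psi>E \<omega>)"
      using om(1) by (simp add: Phi_def compose_def Omega_iff)
    then show ?thesis unfolding om(2) b_def
      using base_map_cls[OF ok i12 fg om(1)] base_map_cls[OF ok i2 fg om(1)]
        base_map_cls[OF ok i1 fg Phi_Omega[OF i2 om(1)]] by simp
  qed
  have H_hom: "H (\<phi> \<otimes>\<^bsub>Aut\<^esub> \<psi>) = H \<phi> \<otimes>\<^bsub>St\<^esub> H \<psi>" if phi: "\<phi> \<in> carrier Aut" and psi: "\<psi> \<in> carrier Aut" for \<phi> \<psi>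
  proof -
    have i1: "graph_iso G G (fst \<phi>) (snd \<phi>)" using autI[OF phi] by simp
    have i2: "graph_iso G G (fst \<psi>) (snd \<psi>)" using autI[OF psi] by simp
    have m: "\<phi> \<otimes>\<^bsub>Aut\<^esub> \<psi> = (compose (verts G) (fst \<phi>) (fst \<psi>), compose (edges G) (snd \<phi>) (snd \<psi>))"
      by (simp add: Aut_def aut_group_def split_beta)
    have "H (\<phi> \<otimes>\<^bsub>Aut\<^esub> \<psi>) x = compose X0 (H \<phi>) (H \<psi>) x" for x
    proof (cases "x \<in> X0")
      case True
      have y: "b (snd \<psi>) (f x) \<in> X" by (rule b_in[OF i2 fin_X[OF True]])
      have hpx: "H \<psi> x = finv (b (snd \<psi>) (f x))" using True by (simp add: H_def)
      have hpin: "H \<psi> x \<in> X0" using finv_in[OF y] hpx by simp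
      have "H (\<phi> \<otimes>\<^bsub>Aut\<^esub> \<psi>) x = finv (b (compose (edges G) (snd \<phi>) (snd \<psi>)) (f x))"
        using True by (simp add: H_def m)
      also have "\<dots> = finv (b (snd \<phi>) (b (snd \<psi>) (f x)))"
        by (simp only: b_comp[OF i1 i2 fin_X[OF True]])
      also have "\<dots> = H \<phi> (H \<psi> x)"
        using hpin hpx f_finv[OF y] by (simp add: H_def)
      also have "\<dots> = compose X0 (H \<phi>) (H \<psi>) x" using True by (simp add: compose_def)
      finally show ?thesis .
    next
      case False
      then show ?thesis by (simp add: compose_def H_def)
    qed
    then show ?thesis by (simp add: St_def rearr_group_def X0_def fun_eq_iff)
  qed
  obtain p where p: "set p \<subseteq> edges R" and deep0: "\<forall>(G' :: ('u, 'd) dgraph) e P \<omega> \<omega>'.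
      has_prefix (e, P @ p) \<omega> \<longrightarrow> gsim G' R vi vt \<omega> \<omega>' \<longrightarrow> has_prefix (e, P) \<omega>'"
    using deep_exists[where 'v='u and 'e='d, OF rexp] by blast
  note deep = deep0[rule_format]
  have H_inj: "inj_on H (carrier Aut)"
  proof (rule inj_onI)
    fix \<phi> \<psi> assume phi: "\<phi> \<in> carrier Aut" and psi: "\<psi> \<in> carrier Aut" and eq: "H \<phi> = H \<psi>"
    have i1: "graph_iso G G (fst \<phi>) (snd \<phi>)" using autI[OF phi] by simp
    have i2: "graph_iso G G (fst \<psi>) (snd \<psi>)" using autI[OF psi] by simp
    have injfinv: "inj_on finv X" unfolding finv_def using surjf by (simp add: inj_on_inv_into)
    have bEq: "b (snd \<phi>) y = b (snd \<psi>) y" if y: "y \<in> X" for y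
    proof -
      obtain x where x: "x \<in> X0" "y = f x" using y surjf by blast
      have "H \<phi> x = H \<psi> x" using eq by simp
      then have "finv (b (snd \<phi>) y) = finv (b (snd \<psi>) y)" using x by (simp add: H_def)
      then show ?thesis using inj_onD[OF injfinv] b_in[OF i1 y] b_in[OF i2 y] by blast
    qed
    have eE: "snd \<phi> e = snd \<psi> e" if e: "e \<in> edges G" for e
    proof -
      define \<omega> where "\<omega> = mk (e, p) z0"
      have om: "\<omega> \<in> Omega G R" unfolding \<omega>_def using e p z0 by (intro mk_Omega) (auto simp: words_def)
      have "b (snd \<phi>) (cls G R vi vt \<omega>) = b (snd \<psi>) (cls G R vi vt \<omega>)"
        using bEq cls_in_Xsp[OF om] unfolding X_def by blast
      then have "cls G R vi vt (Phi (snd \<phi>) \<omega>) = cls G R vi vt (Phi (snd \<psi>) \<omega>)"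
        unfolding b_def base_map_cls[OF ok i1 fg om] base_map_cls[OF ok i2 fg om] .
      then have g: "gsim G R vi vt (Phi (snd \<phi>) \<omega>) (Phi (snd \<psi>) \<omega>)"
        using cls_eq_iff[OF ok Phi_Omega[OF i1 om] Phi_Omega[OF i2 om]] by simp
      have "has_prefix (snd \<phi> e, [] @ p) (Phi (snd \<phi>) \<omega>)"
        unfolding \<omega>_def using Phi_prefix[OF mk_prefix[of "(e, p)" z0], of "snd \<phi>"] by simp
      then have "has_prefix (snd \<phi> e, []) (Phi (snd \<psi>) \<omega>)" using deep g by blast
      then show ?thesis by (simp add: has_prefix_iff Phi_def \<omega>_def mk_def)
    qed
    have eV: "fst \<phi> v = fst \<psi> v" if v: "v \<in> verts G" for v
    proof -
      obtain e where e: "e \<in> edges G" "src G e = v \<or> tgt G e = v" using nisG v by (auto simp: no_isolated_def)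
      then show ?thesis using iso_edge[OF i1 e(1)] iso_edge[OF i2 e(1)] eE[OF e(1)] by auto
    qed
    have "snd \<phi> = snd \<psi>" using eE autI[OF phi] autI[OF psi] by (intro extensionalityI) auto
    moreover have "fst \<phi> = fst \<psi>" using eV autI[OF phi] autI[OF psi] by (intro extensionalityI) auto
    ultimately show "\<phi> = \<psi>" by (simp add: prod_eq_iff)
  qed
  have H_surj: "stabilizer G0 R vi vt G f \<subseteq> H ` carrier Aut"
  proof
    fix g assume g: "g \<in> stabilizer G0 R vi vt G f"
    then have gr: "rearrangement G0 G0 R vi vt g" and ge: "g \<in> extensional X0"
      and re: "range_equiv G0 R vi vt G (compose X0 f g) G f"
      by (simp_all add: stabilizer_def rearr_group_def X0_def)
    obtain \<phi>V \<phi>E where iso: "graph_iso G G \<phi>V \<phi>E"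
      and fe: "\<forall>x\<in>X0. f x = base_map G G R vi vt \<phi>E (compose X0 f g x)"
      using re unfolding range_equiv_def X0_def by blast
    have hg: "homeomorphic_map (Xtop G0 R vi vt) (Xtop G0 R vi vt) g" using gr by (simp add: rearrangement_def)
    have gX0: "g x \<in> X0" if "x \<in> X0" for x
      using homeomorphic_imp_surjective_map[OF hg] that by (auto simp: topspace_Xtop X0_def)
    define \<psi> where "\<psi> = (restrict (inv_into (verts G) \<phi>V) (verts G), restrict (inv_into (edges G) \<phi>E) (edges G))"
    have iso': "graph_iso G G (inv_into (verts G) \<phi>V) (inv_into (edges G) \<phi>E)" by (rule iso_inv[OF iso fg])
    have isop: "graph_iso G G (fst \<psi>) (snd \<psi>)" unfolding \<psi>_def
      by (rule iso_cong[OF iso']) (simp_all add: fg)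
    have psi: "\<psi> \<in> carrier Aut" using isop by (simp add: Aut_def aut_group_def \<psi>_def)
    have "H \<psi> x = g x" for x
    proof (cases "x \<in> X0")
      case True
      have w: "f (g x) \<in> X" by (rule fin_X[OF gX0[OF True]])
      have "f x = b \<phi>E (f (g x))" using fe True by (simp add: compose_def b_def)
      then have "b (snd \<psi>) (f x) = base_map G G R vi vt (inv_into (edges G) \<phi>E) (b \<phi>E (f (g x)))"
        unfolding b_def using base_map_cong[OF b_in[OF iso w, unfolded X_def b_def], of "snd \<psi>" "inv_into (edges G) \<phi>E"]
        by (simp add: \<psi>_def)
      also have "\<dots> = f (g x)" unfolding b_def by (rule base_map_inv[OF ok iso fg w[unfolded X_def]])
      finally show ?thesis using True finv_f[OF gX0[OF True]] by (simp add: H_def)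
    next
      case False
      then show ?thesis using ge by (simp add: H_def extensional_def)
    qed
    then have "g = H \<psi>" by (simp add: fun_eq_iff)
    then show "g \<in> H ` carrier Aut" using psi by blast
  qed
  have H_img: "H ` carrier Aut = stabilizer G0 R vi vt G f" using H_stab H_surj by blast
  have cSt: "carrier St = stabilizer G0 R vi vt G f" by (simp add: St_def)
  have Hiso: "H \<in> iso Aut St"
  proof (rule isoI)
    show "H \<in> hom Aut St" unfolding hom_def using H_stab H_hom cSt by auto
    show "bij_betw H (carrier Aut) (carrier St)" using H_inj H_img cSt by (simp add: bij_betw_def)
  qed
  have "inv_into (carrier Aut) H \<in> iso St Aut"
    by (rule iso_sym_gen[OF Hiso]) (simp add: Aut_def aut_closed fg)
  then have "St \<cong> Aut" by (rule is_isoI)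
  moreover have "finite (stabilizer G0 R vi vt G f)"
    using H_img aut_finite[OF fg] unfolding Aut_def by (metis finite_imageI)
  ultimately show ?thesis by (simp add: St_def Aut_def)
qed

end
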